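(* Let $\mathcal{H}$ be a separable complex Hilbert space, $U$ a unitary operator on $\mathcal{H}$ with spectral measure $E(\cdot)$, and $\Omega\subset\mathbb{T}$ a Borel set. (a) If $\Omega^* = \Omega$, then $C(E(\Omega)\mathcal{H}) = E(\Omega)\mathcal{H}$ for every conjugation $C$ on $\mathcal{H}$ with $CUC = U$. (b) If $C$ is a conjugation on $\mathcal{H}$ with $CUC = U$ and $C(E(\Omega)\mathcal{H}) \subset E(\Omega)\mathcal{H}$, then $E(\Omega\setminus\Omega^* ) = 0$.
   Context: A conjugation on $\mathcal{H}$ is an antilinear, isometric map $C$ with $C^2 = I$. $E(\cdot)$ is the unique projection-valued spectral measure on $\mathbb{T}$ with $U = \int \xi\, dE(\xi)$. For a Borel set $\Omega\subset\mathbb{T}$, $\Omega^* = \{\overline{\xi}:\xi\in\Omega\}$. *)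

theory Defs
  imports "HOL-Analysis.Analysis" "HOL-Probability.Probability"
begin

text \<open>A complex Hilbert space is modelled on an additive group type 'h by an explicit
complex scalar multiplication sm and an inner product ip (linear in the first,
conjugate-linear in the second argument). All topological notions are taken with
respect to the induced norm hnorm, not the (irrelevant) topology of the type.\<close>

definition hnorm :: "('h \<Rightarrow> 'h \<Rightarrow> complex) \<Rightarrow> 'h \<Rightarrow> real" where
  "hnorm ip x = sqrt (Re (ip x x))"

definition complex_vector_space :: "(complex \<Rightarrow> 'h::ab_group_add \<Rightarrow> 'h) \<Rightarrow> bool" where
  "complex_vector_space sm \<longleftrightarrow>
     (\<forall>a x y. sm a (x + y) = sm a x + sm a y) \<and>
     (\<forall>a b x. sm (a + b) x = sm a x + sm b x) \<and>
     (\<forall>a b x. sm a (sm b x) = sm (a * b) x) \<and>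
     (\<forall>x. sm 1 x = x)"

definition inner_product :: "(complex \<Rightarrow> 'h::ab_group_add \<Rightarrow> 'h) \<Rightarrow> ('h \<Rightarrow> 'h \<Rightarrow> complex) \<Rightarrow> bool" where
  "inner_product sm ip \<longleftrightarrow>
     (\<forall>x y z. ip (x + y) z = ip x z + ip y z) \<and>
     (\<forall>a x y. ip (sm a x) y = a * ip x y) \<and>
     (\<forall>x y. ip y x = cnj (ip x y)) \<and>
     (\<forall>x. x \<noteq> 0 \<longrightarrow> Re (ip x x) > 0)"

definition hcomplete :: "('h::ab_group_add \<Rightarrow> 'h \<Rightarrow> complex) \<Rightarrow> bool" where
  "hcomplete ip \<longleftrightarrow>
     (\<forall>s :: nat \<Rightarrow> 'h. (\<forall>e>0. \<exists>N. \<forall>m\<ge>N. \<forall>n\<ge>N. hnorm ip (s m - s n) < e)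
        \<longrightarrow> (\<exists>l. (\<lambda>n. hnorm ip (s n - l)) \<longlonglongrightarrow> 0))"

definition complex_hilbert_space :: "(complex \<Rightarrow> 'h::ab_group_add \<Rightarrow> 'h) \<Rightarrow> ('h \<Rightarrow> 'h \<Rightarrow> complex) \<Rightarrow> bool" where
  "complex_hilbert_space sm ip \<longleftrightarrow> complex_vector_space sm \<and> inner_product sm ip \<and> hcomplete ip"

definition hseparable :: "('h::ab_group_add \<Rightarrow> 'h \<Rightarrow> complex) \<Rightarrow> bool" where
  "hseparable ip \<longleftrightarrow> (\<exists>D. countable D \<and> (\<forall>x e. e > 0 \<longrightarrow> (\<exists>d\<in>D. hnorm ip (x - d) < e)))"

definition hlinear :: "(complex \<Rightarrow> 'h::ab_group_add \<Rightarrow> 'h) \<Rightarrow> ('h \<Rightarrow> 'h) \<Rightarrow> bool" where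
  "hlinear sm T \<longleftrightarrow> (\<forall>x y. T (x + y) = T x + T y) \<and> (\<forall>a x. T (sm a x) = sm a (T x))"

definition hbounded :: "('h::ab_group_add \<Rightarrow> 'h \<Rightarrow> complex) \<Rightarrow> ('h \<Rightarrow> 'h) \<Rightarrow> bool" where
  "hbounded ip T \<longleftrightarrow> (\<exists>K. \<forall>x. hnorm ip (T x) \<le> K * hnorm ip x)"

definition unitary_op :: "(complex \<Rightarrow> 'h::ab_group_add \<Rightarrow> 'h) \<Rightarrow> ('h \<Rightarrow> 'h \<Rightarrow> complex) \<Rightarrow> ('h \<Rightarrow> 'h) \<Rightarrow> bool" where
  "unitary_op sm ip U \<longleftrightarrow> hlinear sm U \<and> surj U \<and> (\<forall>x y. ip (U x) (U y) = ip x y)"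

definition conjugation :: "(complex \<Rightarrow> 'h::ab_group_add \<Rightarrow> 'h) \<Rightarrow> ('h \<Rightarrow> 'h \<Rightarrow> complex) \<Rightarrow> ('h \<Rightarrow> 'h) \<Rightarrow> bool" where
  "conjugation sm ip C \<longleftrightarrow>
     (\<forall>x y. C (x + y) = C x + C y) \<and> (\<forall>a x. C (sm a x) = sm (cnj a) (C x)) \<and>
     (\<forall>x. hnorm ip (C x) = hnorm ip x) \<and> (\<forall>x. C (C x) = x)"

definition borel_T :: "complex set set" where
  "borel_T = {A. A \<in> sets borel \<and> A \<subseteq> sphere 0 1}"

definition pv_measure :: "(complex \<Rightarrow> 'h::ab_group_add \<Rightarrow> 'h) \<Rightarrow> ('h \<Rightarrow> 'h \<Rightarrow> complex)
     \<Rightarrow> (complex set \<Rightarrow> 'h \<Rightarrow> 'h) \<Rightarrow> bool" where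
  "pv_measure sm ip E \<longleftrightarrow>
     (\<forall>A\<in>borel_T. hlinear sm (E A) \<and> hbounded ip (E A) \<and>
        (\<forall>x. E A (E A x) = E A x) \<and> (\<forall>x y. ip (E A x) y = ip x (E A y))) \<and>
     (\<forall>x. E (sphere 0 1) x = x) \<and>
     (\<forall>A\<in>borel_T. \<forall>B\<in>borel_T. \<forall>x. E (A \<inter> B) x = E A (E B x)) \<and>
     (\<forall>A :: nat \<Rightarrow> complex set. (\<forall>i. A i \<in> borel_T) \<longrightarrow> disjoint_family A \<longrightarrow>
        (\<forall>x. (\<lambda>n. hnorm ip ((\<Sum>i<n. E (A i) x) - E (\<Union>i. A i) x)) \<longlonglongrightarrow> 0))"

definition pvm_scalar :: "('h::ab_group_add \<Rightarrow> 'h \<Rightarrow> complex) \<Rightarrow> (complex set \<Rightarrow> 'h \<Rightarrow> 'h) \<Rightarrow> 'h \<Rightarrow> complex measure" where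
  "pvm_scalar ip E x = measure_of (sphere 0 1) borel_T (\<lambda>A. ennreal ((hnorm ip (E A x))\<^sup>2))"

text \<open>E is the spectral measure of U, i.e. U = \<integral> \<xi> dE(\<xi>) (weakly, via the quadratic form,
which determines the operator by polarization).\<close>
definition spectral_measure_of :: "(complex \<Rightarrow> 'h::ab_group_add \<Rightarrow> 'h) \<Rightarrow> ('h \<Rightarrow> 'h \<Rightarrow> complex)
     \<Rightarrow> ('h \<Rightarrow> 'h) \<Rightarrow> (complex set \<Rightarrow> 'h \<Rightarrow> 'h) \<Rightarrow> bool" where
  "spectral_measure_of sm ip U E \<longleftrightarrow> pv_measure sm ip E \<and>
     (\<forall>x. integrable (pvm_scalar ip E x) (\<lambda>z. z) \<and>
          ip (U x) x = (LINT z|pvm_scalar ip E x. z))"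

end

theory Submission
  imports Defs
begin

lemma polar_arith:
  fixes p q r s :: complex
  shows "4 * q = (p + cnj 1 * q + 1 * r + 1 * cnj 1 * s) - (p + cnj (-1) * q + (-1) * r + (-1) * cnj (-1) * s)
     + \<i> * (p + cnj \<i> * q + \<i> * r + \<i> * cnj \<i> * s) - \<i> * (p + cnj (-\<i>) * q + (-\<i>) * r + (-\<i>) * cnj (-\<i>) * s)"
  by (simp add: algebra_simps)

lemma polar_arith2:
  fixes p q r s :: complex
  assumes "X1 = p + cnj 1 * q + 1 * r + 1 * cnj 1 * s" "X2 = p + cnj (-1) * q + (-1) * r + (-1) * cnj (-1) * s"
   "X3 = p + cnj \<i> * q + \<i> * r + \<i> * cnj \<i> * s" "X4 = p + cnj (-\<i>) * q + (-\<i>) * r + (-\<i>) * cnj (-\<i>) * s"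
  shows "4 * q = X1 - X2 + \<i> * X3 - \<i> * X4"
  unfolding assms by (rule polar_arith)

locale hs =
  fixes sm :: "complex \<Rightarrow> 'h::ab_group_add \<Rightarrow> 'h" and ip :: "'h \<Rightarrow> 'h \<Rightarrow> complex"
  assumes H: "complex_hilbert_space sm ip"
begin

lemma sm_add_right: "sm a (x + y) = sm a x + sm a y"
  using H unfolding complex_hilbert_space_def complex_vector_space_def by blast
lemma sm_add_left: "sm (a + b) x = sm a x + sm b x"
  using H unfolding complex_hilbert_space_def complex_vector_space_def by blast
lemma sm_sm: "sm a (sm b x) = sm (a * b) x"
  using H unfolding complex_hilbert_space_def complex_vector_space_def by blast
lemma sm_one[simp]: "sm 1 x = x"
  using H unfolding complex_hilbert_space_def complex_vector_space_def by blast
lemma ip_add_left: "ip (x + y) z = ip x z + ip y z"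
  using H unfolding complex_hilbert_space_def inner_product_def by blast
lemma ip_sm_left: "ip (sm a x) y = a * ip x y"
  using H unfolding complex_hilbert_space_def inner_product_def by blast
lemma ip_sym: "ip y x = cnj (ip x y)"
  using H unfolding complex_hilbert_space_def inner_product_def by blast
lemma ip_pos: "x \<noteq> 0 \<Longrightarrow> Re (ip x x) > 0"
  using H unfolding complex_hilbert_space_def inner_product_def by blast

lemma sm_zero_left[simp]: "sm 0 x = 0"
  using sm_add_left[of 0 0 x] by simp
lemma sm_zero_right[simp]: "sm a 0 = 0"
  using sm_add_right[of a 0 0] by simp
lemma sm_minus_right: "sm a (- x) = - sm a x"
  using sm_add_right[of a x "-x"] by (metis add.right_inverse minus_unique sm_zero_right)
lemma sm_diff_right: "sm a (x - y) = sm a x - sm a y"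
  using sm_add_right[of a x "-y"] sm_minus_right by simp
lemma sm_minus_left: "sm (- a) x = - sm a x"
  using sm_add_left[of a "-a" x] by (metis add.right_inverse minus_unique sm_zero_left)
lemma sm_minus_one[simp]: "sm (-1) x = - x"
  using sm_minus_left[of 1 x] by simp

lemma ip_add_right: "ip z (x + y) = ip z x + ip z y"
  by (metis ip_sym ip_add_left complex_cnj_add)
lemma ip_sm_right: "ip x (sm a y) = cnj a * ip x y"
  by (metis ip_sym ip_sm_left complex_cnj_mult)
lemma ip_zero_left[simp]: "ip 0 y = 0"
  using ip_add_left[of 0 0 y] by simp
lemma ip_zero_right[simp]: "ip y 0 = 0"
  using ip_add_right[of y 0 0] by simp
lemma ip_minus_left: "ip (- x) y = - ip x y"
  using ip_add_left[of x "-x" y] by (metis add.right_inverse minus_unique ip_zero_left)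
lemma ip_minus_right: "ip y (- x) = - ip y x"
  using ip_add_right[of y x "-x"] by (metis add.right_inverse minus_unique ip_zero_right)
lemma ip_diff_left: "ip (x - z) y = ip x y - ip z y"
  using ip_add_left[of x "-z" y] ip_minus_left by simp
lemma ip_diff_right: "ip y (x - z) = ip y x - ip y z"
  using ip_add_right[of y x "-z"] ip_minus_right by simp

lemma ip_self_real: "ip x x = complex_of_real (Re (ip x x))"
proof -
  have "Im (ip x x) = Im (cnj (ip x x))" using ip_sym[of x x] by (rule arg_cong)
  then have "Im (ip x x) = 0" by simp
  then show ?thesis by (simp add: complex_eq_iff)
qed
lemma ip_self_nonneg: "Re (ip x x) \<ge> 0"
  by (cases "x = 0") (auto dest: ip_pos)
lemma hnorm_sq: "(hnorm ip x)\<^sup>2 = Re (ip x x)"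
  unfolding hnorm_def using ip_self_nonneg by simp
lemma ip_self_hnorm: "ip x x = complex_of_real ((hnorm ip x)\<^sup>2)"
  using hnorm_sq ip_self_real by simp
lemma hnorm_nonneg: "hnorm ip x \<ge> 0"
  unfolding hnorm_def using ip_self_nonneg by simp
lemma hnorm_zero_iff: "hnorm ip x = 0 \<longleftrightarrow> x = 0"
  unfolding hnorm_def using ip_pos[of x] ip_self_nonneg[of x] by (cases "x = 0") auto
lemma hnorm_minus: "hnorm ip (- x) = hnorm ip x"
  unfolding hnorm_def by (simp add: ip_minus_left ip_minus_right)
lemma hnorm_sm: "hnorm ip (sm a x) = cmod a * hnorm ip x"
proof -
  have "ip (sm a x) (sm a x) = a * (cnj a * ip x x)"
    by (simp only: ip_sm_left ip_sm_right mult.left_commute)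
  also have "\<dots> = (a * cnj a) * ip x x"
    by (rule mult.assoc[symmetric])
  also have "\<dots> = complex_of_real ((cmod a)^2) * ip x x"
    by (simp only: complex_mult_cnj cmod_power2)
  finally have "Re (ip (sm a x) (sm a x)) = Re (complex_of_real ((cmod a)^2) * ip x x)"
    by (rule arg_cong)
  also have "\<dots> = (cmod a)^2 * Re (ip x x)"
    by simp
  finally have e: "Re (ip (sm a x) (sm a x)) = (cmod a)^2 * Re (ip x x)" .
  have "hnorm ip (sm a x) = sqrt ((cmod a)^2) * sqrt (Re (ip x x))"
    unfolding hnorm_def e by (rule real_sqrt_mult)
  then show ?thesis unfolding hnorm_def by simp
qed

lemma ip_eq_zero: "(\<And>y. ip x y = 0) \<Longrightarrow> x = 0"
  using ip_pos by force

lemma pythag: "ip a b = 0 \<Longrightarrow> (hnorm ip (a + b))\<^sup>2 = (hnorm ip a)\<^sup>2 + (hnorm ip b)\<^sup>2"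
  unfolding hnorm_sq using ip_sym[of b a]
  by (simp add: ip_add_left ip_add_right)

lemma ex_expand:
  assumes "\<And>x y. T (x + y) = T x + T y" "\<And>a x. T (sm a x) = sm a (T x)"
  shows "ip (T (a + sm c b)) (a + sm c b) = ip (T a) a + cnj c * ip (T a) b + c * ip (T b) a + c * cnj c * ip (T b) b"
proof -
  have 1: "ip (T (a + sm c b)) (a + sm c b) = ip (T a + sm c (T b)) (a + sm c b)"
    by (simp only: assms)
  have 2: "ip (T a + sm c (T b)) (a + sm c b) = ip (T a) (a + sm c b) + c * ip (T b) (a + sm c b)"
    by (simp only: ip_add_left ip_sm_left)
  have 3: "ip (T a) (a + sm c b) + c * ip (T b) (a + sm c b) = (ip (T a) a + cnj c * ip (T a) b) + c * (ip (T b) a + cnj c * ip (T b) b)"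
    by (simp only: ip_add_right ip_sm_right)
  have 4: "(ip (T a) a + cnj c * ip (T a) b) + c * (ip (T b) a + cnj c * ip (T b) b) = ip (T a) a + cnj c * ip (T a) b + c * ip (T b) a + c * cnj c * ip (T b) b"
    by (simp only: distrib_left mult.assoc add.assoc)
  show ?thesis by (rule trans[OF 1 trans[OF 2 trans[OF 3 4]]])
qed

lemma polarization:
  assumes "\<And>x y. T (x + y) = T x + T y" "\<And>a x. T (sm a x) = sm a (T x)"
  shows "4 * ip (T a) b = ip (T (a + b)) (a + b) - ip (T (a + sm (-1) b)) (a + sm (-1) b)
       + \<i> * ip (T (a + sm \<i> b)) (a + sm \<i> b) - \<i> * ip (T (a + sm (-\<i>) b)) (a + sm (-\<i>) b)"
proof -
  have e1: "ip (T (a + b)) (a + b) = ip (T a) a + cnj 1 * ip (T a) b + 1 * ip (T b) a + 1 * cnj 1 * ip (T b) b"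
    using ex_expand[OF assms, of a 1 b] by simp
  show ?thesis
    by (rule polar_arith2[OF e1 ex_expand[OF assms] ex_expand[OF assms] ex_expand[OF assms]])
qed

lemma quad_form_unique:
  assumes S1: "\<And>x y. S (x + y) = S x + S y" and S2: "\<And>a x. S (sm a x) = sm a (S x)"
  and T1: "\<And>x y. T (x + y) = T x + T y" and T2: "\<And>a x. T (sm a x) = sm a (T x)"
  and eq: "\<And>x. ip (S x) x = ip (T x) x"
  shows "S x = T x"
proof -
  have "ip (S x) y = ip (T x) y" for y
  proof -
    have "4 * ip (S x) y = 4 * ip (T x) y"
      by (simp only: polarization[of S x y, OF S1 S2] polarization[of T x y, OF T1 T2] eq)
    then show ?thesis by simp
  qed
  then have "ip (S x - T x) y = 0" for y by (simp add: ip_diff_left)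
  then show ?thesis using ip_eq_zero[of "S x - T x"] by simp
qed

end

abbreviation S1 :: "complex set" where "S1 \<equiv> sphere 0 1"

lemma borel_T_eq: "borel_T = sets (restrict_space borel S1)"
proof -
  have "sets (restrict_space borel S1) = (\<inter>) S1 ` sets borel" by (rule sets_restrict_space)
  also have "\<dots> = borel_T"
  proof
    show "(\<inter>) S1 ` sets borel \<subseteq> borel_T"
      unfolding borel_T_def by auto
    show "borel_T \<subseteq> (\<inter>) S1 ` sets borel"
    proof
      fix A assume "A \<in> borel_T"
      then have "A \<in> sets borel" "A \<subseteq> S1" unfolding borel_T_def by auto
      then show "A \<in> (\<inter>) S1 ` sets borel" by (intro image_eqI[of _ _ A]) auto
    qed
  qed
  finally show ?thesis by simp
qed

lemma S1_borel_T: "S1 \<in> borel_T"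
  unfolding borel_T_def by auto
lemma borel_T_sub: "A \<in> borel_T \<Longrightarrow> A \<subseteq> S1"
  unfolding borel_T_def by auto
lemma borel_T_Int: "A \<in> borel_T \<Longrightarrow> B \<in> borel_T \<Longrightarrow> A \<inter> B \<in> borel_T"
  unfolding borel_T_def by auto
lemma borel_T_Un: "A \<in> borel_T \<Longrightarrow> B \<in> borel_T \<Longrightarrow> A \<union> B \<in> borel_T"
  unfolding borel_T_def by auto
lemma borel_T_Diff: "A \<in> borel_T \<Longrightarrow> B \<in> borel_T \<Longrightarrow> A - B \<in> borel_T"
  unfolding borel_T_def by auto
lemma borel_T_empty: "{} \<in> borel_T"
  unfolding borel_T_def by auto
lemma borel_T_UN: "(\<And>i. A i \<in> borel_T) \<Longrightarrow> (\<Union>i<(n::nat). A i) \<in> borel_T"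
proof -
  assume h: "\<And>i. A i \<in> borel_T"
  have "\<And>i. A i \<in> sets borel" using h unfolding borel_T_def by auto
  then have "(\<Union>i\<in>{..<n}. A i) \<in> sets borel" by (intro sets.finite_UN) auto
  moreover have "(\<Union>i<n. A i) \<subseteq> S1" using h unfolding borel_T_def by auto
  ultimately show ?thesis unfolding borel_T_def by auto
qed
lemma borel_T_UNIV_UN: "(\<And>i::nat. A i \<in> borel_T) \<Longrightarrow> (\<Union>i. A i) \<in> borel_T"
  unfolding borel_T_def by (auto intro!: sets.countable_UN)
lemma borel_T_cnj: "A \<in> borel_T \<Longrightarrow> cnj ` A \<in> borel_T"
proof -
  assume A: "A \<in> borel_T"
  have "cnj ` A = cnj -` A"
    by (auto simp: image_iff) (metis complex_cnj_cnj)
  moreover have "cnj -` A \<in> sets borel"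
    using A unfolding borel_T_def by (auto intro: measurable_sets_borel[OF borel_measurable_continuous_onI[OF continuous_on_cnj[OF continuous_on_id]]])
  moreover have "cnj ` A \<subseteq> S1" using A unfolding borel_T_def by auto
  ultimately show ?thesis unfolding borel_T_def by auto
qed

lemma sigma_algebra_borel_T: "sigma_algebra S1 borel_T"
proof -
  have "sigma_algebra (space (restrict_space borel S1)) (sets (restrict_space borel S1))"
    by (rule sets.sigma_algebra_axioms)
  moreover have "space (restrict_space borel S1) = S1"
    by (simp add: space_restrict_space)
  ultimately show ?thesis by (simp add: borel_T_eq)
qed

locale hsE = hs sm ip
  for sm :: "complex \<Rightarrow> 'h::ab_group_add \<Rightarrow> 'h" and ip :: "'h \<Rightarrow> 'h \<Rightarrow> complex" +
  fixes E :: "complex set \<Rightarrow> 'h \<Rightarrow> 'h"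
  assumes pv: "pv_measure sm ip E"
begin

lemma E_add_right: "A \<in> borel_T \<Longrightarrow> E A (x + y) = E A x + E A y"
  using pv unfolding pv_measure_def hlinear_def by blast
lemma E_sm: "A \<in> borel_T \<Longrightarrow> E A (sm a x) = sm a (E A x)"
  using pv unfolding pv_measure_def hlinear_def by blast
lemma E_idem: "A \<in> borel_T \<Longrightarrow> E A (E A x) = E A x"
  using pv unfolding pv_measure_def by blast
lemma E_sa: "A \<in> borel_T \<Longrightarrow> ip (E A x) y = ip x (E A y)"
  using pv unfolding pv_measure_def by blast
lemma E_S1: "E S1 x = x"
  using pv unfolding pv_measure_def by blast
lemma E_mult: "A \<in> borel_T \<Longrightarrow> B \<in> borel_T \<Longrightarrow> E (A \<inter> B) x = E A (E B x)"
  using pv unfolding pv_measure_def by blast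
lemma E_ca: "(\<And>i. A i \<in> borel_T) \<Longrightarrow> disjoint_family A \<Longrightarrow>
   (\<lambda>n. hnorm ip ((\<Sum>i<n. E (A i) x) - E (\<Union>i. A i) x)) \<longlonglongrightarrow> 0"
  using pv unfolding pv_measure_def by blast

lemma E_zero: "A \<in> borel_T \<Longrightarrow> E A 0 = 0"
  using E_add_right[of A 0 0] by simp
lemma E_minus: "A \<in> borel_T \<Longrightarrow> E A (- x) = - E A x"
  using E_add_right[of A x "-x"] E_zero[of A] by (metis add.right_inverse minus_unique)
lemma E_diff: "A \<in> borel_T \<Longrightarrow> E A (x - y) = E A x - E A y"
  using E_add_right[of A x "-y"] E_minus[of A y] by simp

lemma sum_const_sm: "(\<Sum>i<n. v) = sm (of_nat n) v"
proof (induction n)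
  case 0 then show ?case by simp
next
  case (Suc n)
  have "(\<Sum>i<Suc n. v) = sm (of_nat n) v + sm 1 v" using Suc by simp
  also have "\<dots> = sm (of_nat n + 1) v" by (rule sm_add_left[symmetric])
  finally show ?case by (simp add: add.commute)
qed

lemma E_empty: "E {} x = 0"
proof -
  define v where "v = E {} x"
  have dj: "disjoint_family (\<lambda>_::nat. {}::complex set)" by (simp add: disjoint_family_on_def)
  have lim: "(\<lambda>n. hnorm ip ((\<Sum>i<n. E {} x) - E {} x)) \<longlonglongrightarrow> 0"
    using E_ca[of "\<lambda>_. {}" x, OF borel_T_empty dj] by simp
  have eq: "hnorm ip ((\<Sum>i<n. E {} x) - E {} x) = cmod (of_nat n - 1) * hnorm ip v" for n
  proof -
    have "(\<Sum>i<n. E {} x) - E {} x = sm (of_nat n) v - v"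
      by (simp add: sum_const_sm v_def)
    also have "\<dots> = sm (of_nat n - 1) v"
      by (simp add: sm_add_left[of "of_nat n" "-1" v, simplified])
    finally show ?thesis by (simp add: hnorm_sm)
  qed
  have "hnorm ip v = 0"
  proof (rule ccontr)
    assume ne: "hnorm ip v \<noteq> 0"
    then have pos: "hnorm ip v > 0" using hnorm_nonneg[of v] by simp
    have "\<forall>\<^sub>F n in sequentially. hnorm ip ((\<Sum>i<n. E {} x) - E {} x) < hnorm ip v"
      using order_tendstoD(2)[OF lim pos] .
    then have "\<exists>N::nat. \<forall>n\<ge>N. hnorm ip ((\<Sum>i<n. E {} x) - E {} x) < hnorm ip v"
      by (simp only: eventually_sequentially)
    then obtain N :: nat where N0: "\<forall>n\<ge>N. hnorm ip ((\<Sum>i<n. E {} x) - E {} x) < hnorm ip v"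
      by (rule exE)
    have N: "cmod (of_nat n - 1) * hnorm ip v < hnorm ip v" if "n \<ge> N" for n
      using N0[rule_format, OF that] unfolding eq .
    have "cmod (of_nat (N + 2) - 1 :: complex) = real N + 1"
    proof -
      have "(of_nat (N + 2) - 1 :: complex) = of_real (real N + 1)" by simp
      then show ?thesis by (simp only: norm_of_real)
    qed
    then have "hnorm ip v \<le> cmod (of_nat (N + 2) - 1 :: complex) * hnorm ip v"
      using pos by simp
    with N[of "N+2"] show False by simp
  qed
  then show ?thesis using hnorm_zero_iff v_def by simp
qed

lemma E_add_disj:
  assumes A: "A \<in> borel_T" and B: "B \<in> borel_T" and d: "A \<inter> B = {}"
  shows "E (A \<union> B) x = E A x + E B x"
proof -
  define F where "F i = (if i = 0 then A else if i = 1 then B else {})" for i :: nat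
  have F: "F i \<in> borel_T" for i using A B borel_T_empty by (simp add: F_def)
  have disj: "disjoint_family F"
    unfolding disjoint_family_on_def F_def using d by auto
  have U: "(\<Union>i. F i) = A \<union> B"
  proof
    show "(\<Union>i. F i) \<subseteq> A \<union> B" by (auto simp: F_def split: if_splits)
    show "A \<union> B \<subseteq> (\<Union>i. F i)"
    proof
      fix z assume "z \<in> A \<union> B"
      then show "z \<in> (\<Union>i. F i)"
      proof
        assume "z \<in> A" then show ?thesis by (intro UN_I[of 0]) (auto simp: F_def)
      next
        assume "z \<in> B" then show ?thesis by (intro UN_I[of 1]) (auto simp: F_def)
      qed
    qed
  qed
  have s: "(\<Sum>i<n + 2. E (F i) x) = E A x + E B x" for n
  proof (induction n)
    case 0
    have "(\<Sum>i<0 + 2. E (F i) x) = E (F 0) x + E (F 1) x"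
      by (simp add: numeral_2_eq_2)
    then show ?case by (simp add: F_def)
  next
    case (Suc n)
    have "(\<Sum>i<Suc n + 2. E (F i) x) = (\<Sum>i<n + 2. E (F i) x) + E (F (n + 2)) x" by simp
    also have "E (F (n + 2)) x = 0" by (simp add: F_def E_empty)
    finally show ?case using Suc by simp
  qed
  have "(\<lambda>n. hnorm ip ((\<Sum>i<n. E (F i) x) - E (\<Union>i. F i) x)) \<longlonglongrightarrow> 0"
    by (rule E_ca[OF F disj])
  then have "(\<lambda>n. hnorm ip ((\<Sum>i<n + 2. E (F i) x) - E (\<Union>i. F i) x)) \<longlonglongrightarrow> 0"
    by (rule LIMSEQ_ignore_initial_segment)
  then have "(\<lambda>n. hnorm ip (E A x + E B x - E (A \<union> B) x)) \<longlonglongrightarrow> 0"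
    by (simp only: s U)
  then have "hnorm ip (E A x + E B x - E (A \<union> B) x) = 0"
    by (simp add: LIMSEQ_const_iff)
  then show ?thesis using hnorm_zero_iff by simp
qed

lemma E_compl: "A \<in> borel_T \<Longrightarrow> E (S1 - A) x = x - E A x"
proof -
  assume A: "A \<in> borel_T"
  have "E (A \<union> (S1 - A)) x = E A x + E (S1 - A) x"
    by (rule E_add_disj) (use A S1_borel_T borel_T_Diff in auto)
  moreover have "A \<union> (S1 - A) = S1" using borel_T_sub[OF A] by auto
  ultimately show ?thesis using E_S1 by (simp add: algebra_simps)
qed

lemma E_orth: "A \<in> borel_T \<Longrightarrow> B \<in> borel_T \<Longrightarrow> A \<inter> B = {} \<Longrightarrow> ip (E A x) (E B y) = 0"
proof -
  assume A: "A \<in> borel_T" and B: "B \<in> borel_T" and d: "A \<inter> B = {}"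
  have "ip (E A x) (E B y) = ip (E B (E A x)) y" using E_sa[OF B] by simp
  also have "E B (E A x) = E (B \<inter> A) x" using E_mult[OF B A] by simp
  also have "B \<inter> A = {}" using d by auto
  finally show ?thesis by (simp add: E_empty)
qed

lemma E_ip_self: "A \<in> borel_T \<Longrightarrow> ip (E A x) x = complex_of_real ((hnorm ip (E A x))\<^sup>2)"
proof -
  assume A: "A \<in> borel_T"
  have "ip (E A x) x = ip (E A (E A x)) x" using E_idem[OF A] by simp
  also have "\<dots> = ip (E A x) (E A x)" using E_sa[OF A] by simp
  finally show ?thesis using ip_self_hnorm by simp
qed

end

context hsE
begin

abbreviation mu where "mu x \<equiv> pvm_scalar ip E x"

lemma E_fin_add:
  assumes A: "\<And>i. A i \<in> borel_T" and d: "disjoint_family A"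
  shows "E (\<Union>i<(n::nat). A i) x = (\<Sum>i<n. E (A i) x)"
proof (induction n)
  case 0 then show ?case by (simp add: E_empty)
next
  case (Suc n)
  have "(\<Union>i<Suc n. A i) = (\<Union>i<n. A i) \<union> A n" by (auto simp: lessThan_Suc)
  moreover have "(\<Union>i<n. A i) \<inter> A n = {}"
  proof -
    have "A i \<inter> A n = {}" if "i < n" for i using d that unfolding disjoint_family_on_def by auto
    then show ?thesis by auto
  qed
  ultimately have "E (\<Union>i<Suc n. A i) x = E (\<Union>i<n. A i) x + E (A n) x"
    using E_add_disj[OF borel_T_UN[OF A] A] by simp
  then show ?case using Suc by simp
qed

lemma E_fin_norm:
  assumes A: "\<And>i. A i \<in> borel_T" and d: "disjoint_family A"
  shows "(hnorm ip (E (\<Union>i<(n::nat). A i) x))\<^sup>2 = (\<Sum>i<n. (hnorm ip (E (A i) x))\<^sup>2)"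
proof (induction n)
  case 0 then show ?case by (simp add: E_empty hnorm_def)
next
  case (Suc n)
  have "(\<Union>i<Suc n. A i) = (\<Union>i<n. A i) \<union> A n" by (auto simp: lessThan_Suc)
  moreover have dj: "(\<Union>i<n. A i) \<inter> A n = {}"
  proof -
    have "A i \<inter> A n = {}" if "i < n" for i using d that unfolding disjoint_family_on_def by auto
    then show ?thesis by auto
  qed
  ultimately have "E (\<Union>i<Suc n. A i) x = E (\<Union>i<n. A i) x + E (A n) x"
    using E_add_disj[OF borel_T_UN[OF A] A] by simp
  moreover have "ip (E (\<Union>i<n. A i) x) (E (A n) x) = 0"
    by (rule E_orth[OF borel_T_UN[OF A] A dj])
  ultimately have "(hnorm ip (E (\<Union>i<Suc n. A i) x))\<^sup>2 = (hnorm ip (E (\<Union>i<n. A i) x))\<^sup>2 + (hnorm ip (E (A n) x))\<^sup>2"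
    using pythag by simp
  then show ?case using Suc by simp
qed

lemma mu_ca: "countably_additive borel_T (\<lambda>A. ennreal ((hnorm ip (E A x))\<^sup>2))"
  unfolding countably_additive_def
proof (intro allI impI)
  fix A :: "nat \<Rightarrow> complex set"
  assume r: "range A \<subseteq> borel_T" and d: "disjoint_family A" and U: "(\<Union>i. A i) \<in> borel_T"
  have A: "\<And>i. A i \<in> borel_T" using r by auto
  define L where "L = (hnorm ip (E (\<Union>i. A i) x))\<^sup>2"
  define a where "a i = (hnorm ip (E (A i) x))\<^sup>2" for i
  define r where "r n = hnorm ip ((\<Sum>i<n. E (A i) x) - E (\<Union>i. A i) x)" for n
  have rl: "r \<longlonglongrightarrow> 0" unfolding r_def by (rule E_ca[OF A d])
  have key: "(\<Sum>i<n. a i) = L - (r n)\<^sup>2" for n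
  proof -
    have sub: "(\<Union>i<n. A i) \<subseteq> (\<Union>i. A i)" by auto
    have R: "(\<Union>i. A i) - (\<Union>i<n. A i) \<in> borel_T" by (rule borel_T_Diff[OF U borel_T_UN[OF A]])
    have dj: "(\<Union>i<n. A i) \<inter> ((\<Union>i. A i) - (\<Union>i<n. A i)) = {}" by auto
    have un: "(\<Union>i<n. A i) \<union> ((\<Union>i. A i) - (\<Union>i<n. A i)) = (\<Union>i. A i)" using sub by auto
    have e: "E (\<Union>i. A i) x = E (\<Union>i<n. A i) x + E ((\<Union>i. A i) - (\<Union>i<n. A i)) x"
      using E_add_disj[OF borel_T_UN[OF A] R dj] un by simp
    have o: "ip (E (\<Union>i<n. A i) x) (E ((\<Union>i. A i) - (\<Union>i<n. A i)) x) = 0"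
      by (rule E_orth[OF borel_T_UN[OF A] R dj])
    have "E ((\<Union>i. A i) - (\<Union>i<n. A i)) x = - ((\<Sum>i<n. E (A i) x) - E (\<Union>i. A i) x)"
      using e E_fin_add[OF A d, of n x] by (simp add: algebra_simps)
    then have rn: "hnorm ip (E ((\<Union>i. A i) - (\<Union>i<n. A i)) x) = r n"
      unfolding r_def by (simp only: hnorm_minus)
    have "L = (hnorm ip (E (\<Union>i<n. A i) x))\<^sup>2 + (r n)\<^sup>2"
      unfolding L_def e pythag[OF o] rn by simp
    then show ?thesis using E_fin_norm[OF A d, of n x] unfolding a_def by simp
  qed
  have "(\<lambda>n. L - (r n)\<^sup>2) \<longlonglongrightarrow> L - 0\<^sup>2"
    by (intro tendsto_intros rl)
  then have "(\<lambda>n. \<Sum>i<n. a i) \<longlonglongrightarrow> L" unfolding key by simp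
  then have "a sums L" unfolding sums_def .
  then have "(\<Sum>i. ennreal (a i)) = ennreal L"
    by (rule suminf_ennreal_eq[rotated]) (simp add: a_def)
  then show "(\<Sum>i. ennreal ((hnorm ip (E (A i) x))\<^sup>2)) = ennreal ((hnorm ip (E (\<Union>i. A i) x))\<^sup>2)"
    unfolding a_def L_def .
qed

lemma mu_pos: "positive borel_T (\<lambda>A. ennreal ((hnorm ip (E A x))\<^sup>2))"
  unfolding positive_def by (simp add: E_empty hnorm_def)

lemma sets_mu[simp]: "sets (mu x) = borel_T"
  unfolding pvm_scalar_def using sigma_algebra.sets_measure_of_eq[OF sigma_algebra_borel_T] .

lemma space_mu[simp]: "space (mu x) = S1"
  unfolding pvm_scalar_def using sigma_algebra.space_measure_of_eq[OF sigma_algebra_borel_T] .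

lemma emeasure_mu: "A \<in> borel_T \<Longrightarrow> emeasure (mu x) A = ennreal ((hnorm ip (E A x))\<^sup>2)"
  unfolding pvm_scalar_def by (rule emeasure_measure_of_sigma[OF sigma_algebra_borel_T mu_pos mu_ca])

lemma measure_mu: "A \<in> borel_T \<Longrightarrow> measure (mu x) A = (hnorm ip (E A x))\<^sup>2"
  unfolding measure_def by (simp add: emeasure_mu)

lemma finite_mu: "finite_measure (mu x)"
  by (rule finite_measureI) (simp add: emeasure_mu S1_borel_T)

lemma meas_mu: "f \<in> borel_measurable borel \<Longrightarrow> f \<in> borel_measurable (mu x)"
proof -
  assume f: "f \<in> borel_measurable borel"
  have eq: "measurable (mu x) borel = measurable (restrict_space borel S1) borel"
    by (rule measurable_cong_sets) (simp_all add: borel_T_eq)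
  show ?thesis unfolding eq by (rule measurable_restrict_space1[OF f])
qed

lemma int_mu:
  fixes f :: "complex \<Rightarrow> 'b::{banach,second_countable_topology}"
  assumes "f \<in> borel_measurable (mu x)" "\<And>z. z \<in> S1 \<Longrightarrow> norm (f z) \<le> B"
  shows "integrable (mu x) f"
proof -
  interpret finite_measure "mu x" by (rule finite_mu)
  show ?thesis
    by (rule integrable_const_bound[where B=B]) (use assms in auto)
qed

lemma mu_density:
  assumes A: "A \<in> borel_T"
  shows "mu (E A x) = density (mu x) (\<lambda>z. ennreal (indicator A z))"
proof (rule measure_eqI)
  show "sets (mu (E A x)) = sets (density (mu x) (\<lambda>z. ennreal (indicator A z)))" by simp
  fix B assume "B \<in> sets (mu (E A x))"
  then have B: "B \<in> borel_T" by simp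
  have im: "indicator A \<in> borel_measurable (mu x)"
    by (rule borel_measurable_indicator) (simp add: A)
  have "emeasure (density (mu x) (\<lambda>z. ennreal (indicator A z))) B
      = (\<integral>\<^sup>+ z. ennreal (indicator A z) * indicator B z \<partial>mu x)"
    by (rule emeasure_density) (use im B in auto)
  also have "\<dots> = (\<integral>\<^sup>+ z. indicator (B \<inter> A) z \<partial>mu x)"
    by (rule nn_integral_cong) (simp split: split_indicator)
  also have "\<dots> = emeasure (mu x) (B \<inter> A)"
    by (rule nn_integral_indicator) (simp add: borel_T_Int[OF B A])
  also have "\<dots> = ennreal ((hnorm ip (E (B \<inter> A) x))\<^sup>2)"
    by (rule emeasure_mu[OF borel_T_Int[OF B A]])
  also have "\<dots> = emeasure (mu (E A x)) B"
    by (simp add: emeasure_mu[OF B] E_mult[OF B A])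
  finally show "emeasure (mu (E A x)) B = emeasure (density (mu x) (\<lambda>z. ennreal (indicator A z))) B" ..
qed

lemma integral_mu_E:
  fixes f :: "complex \<Rightarrow> 'b::{banach,second_countable_topology}"
  assumes A: "A \<in> borel_T" and f: "f \<in> borel_measurable (mu x)"
  shows "integral\<^sup>L (mu (E A x)) f = integral\<^sup>L (mu x) (\<lambda>z. indicator A z *\<^sub>R f z)"
proof -
  have im: "indicator A \<in> borel_measurable (mu x)"
    by (rule borel_measurable_indicator) (simp add: A)
  show ?thesis
    unfolding mu_density[OF A] by (rule integral_density[OF f im]) simp
qed

end

definition gc :: "complex \<Rightarrow> complex \<Rightarrow> real" where
  "gc c z = (cmod (z + c))\<^sup>2"

lemma gc_nonneg: "gc c z \<ge> 0" unfolding gc_def by simp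

lemma gc_cont: "continuous_on UNIV (gc c)"
  unfolding gc_def by (intro continuous_intros)

lemma gc_S1:
  assumes "cmod z = 1"
  shows "complex_of_real (gc c z) = 1 + c * cnj c + cnj c * z + c * cnj z"
proof -
  have "complex_of_real (gc c z) = (z + c) * cnj (z + c)"
    unfolding gc_def by (rule complex_norm_square)
  also have "\<dots> = z * cnj z + c * cnj c + cnj c * z + c * cnj z"
    by (simp add: algebra_simps)
  also have "z * cnj z = complex_of_real ((cmod z)\<^sup>2)"
    by (rule complex_norm_square[symmetric])
  also have "\<dots> = 1" using assms by simp
  finally show ?thesis .
qed

lemma gc_bound: "cmod z = 1 \<Longrightarrow> gc c z \<le> (1 + cmod c)\<^sup>2"
  unfolding gc_def
proof -
  assume z: "cmod z = 1"
  have "cmod (z + c) \<le> 1 + cmod c" using norm_triangle_ineq[of z c] z by simp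
  then show "(cmod (z + c))\<^sup>2 \<le> (1 + cmod c)\<^sup>2"
    by (intro power_mono) auto
qed

lemma gc_combo:
  "complex_of_real (gc 1 z) - complex_of_real (gc (-1) z) + \<i> * complex_of_real (gc \<i> z)
    - \<i> * complex_of_real (gc (-\<i>) z) = 4 * z"
  unfolding gc_def cmod_power2
  by (simp add: complex_eq_iff power2_eq_square algebra_simps)

lemma ab_zero:
  fixes a b :: complex
  assumes h1: "a + b = 0" and h2: "- \<i> * a + \<i> * b = 0"
  shows "a = 0 \<and> b = 0"
proof -
  have b: "b = - a" using h1 by (simp add: add_eq_0_iff)
  have "(2 * \<i>) * a = 0" using h2 unfolding b by (simp add: algebra_simps)
  then have "a = 0" by simp
  then show ?thesis using b by simp
qed

locale hsU = hsE sm ip E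
  for sm :: "complex \<Rightarrow> 'h::ab_group_add \<Rightarrow> 'h" and ip :: "'h \<Rightarrow> 'h \<Rightarrow> complex"
  and E :: "complex set \<Rightarrow> 'h \<Rightarrow> 'h" +
  fixes U :: "'h \<Rightarrow> 'h"
  assumes Uu: "unitary_op sm ip U" and spec: "spectral_measure_of sm ip U E"
begin

lemma U_add: "U (x + y) = U x + U y"
  using Uu unfolding unitary_op_def hlinear_def by blast
lemma U_sm: "U (sm a x) = sm a (U x)"
  using Uu unfolding unitary_op_def hlinear_def by blast
lemma U_ip: "ip (U x) (U y) = ip x y"
  using Uu unfolding unitary_op_def by blast
lemma U_zero: "U 0 = 0"
  using U_add[of 0 0] by simp
lemma U_minus: "U (- x) = - U x"
  using U_add[of x "-x"] U_zero by (metis add.right_inverse minus_unique)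
lemma U_diff: "U (x - y) = U x - U y"
  using U_add[of x "-y"] U_minus[of y] by simp

lemma U_spec: "ip (U x) x = (LINT z|mu x. z)"
  using spec unfolding spectral_measure_of_def by blast

lemma cont_meas: "continuous_on UNIV f \<Longrightarrow> f \<in> borel_measurable (mu x)"
  by (rule meas_mu) (rule borel_measurable_continuous_onI)

lemma ind_meas:
  fixes f :: "complex \<Rightarrow> 'b::{banach,second_countable_topology}"
  assumes B: "B \<in> borel_T" and f: "continuous_on UNIV f"
  shows "(\<lambda>z. indicator B z *\<^sub>R f z) \<in> borel_measurable (mu x)"
proof -
  have h1: "(indicator B :: complex \<Rightarrow> real) \<in> borel_measurable (mu x)"
    by (rule borel_measurable_indicator) (simp add: B)
  have h2: "f \<in> borel_measurable (mu x)" by (rule cont_meas[OF f])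
  show ?thesis by (rule borel_measurable_scaleR[OF h1 h2])
qed

lemma ind_int:
  fixes f :: "complex \<Rightarrow> 'b::{banach,second_countable_topology}"
  assumes B: "B \<in> borel_T" and f: "continuous_on UNIV f" and bd: "\<And>z. z \<in> S1 \<Longrightarrow> norm (f z) \<le> K"
  shows "integrable (mu x) (\<lambda>z. indicator B z *\<^sub>R f z)"
proof (rule int_mu[OF ind_meas[OF B f], where B = K])
  fix z assume z: "z \<in> S1"
  have "norm (indicator B z *\<^sub>R f z) \<le> norm (f z)" by (simp split: split_indicator)
  then show "norm (indicator B z *\<^sub>R f z) \<le> K" using bd[OF z] by linarith
qed

lemma U_spec_A:
  assumes A: "A \<in> borel_T"
  shows "ip (U (E A x)) (E A x) = (LINT z|mu x. indicator A z *\<^sub>R z)"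
  using U_spec[of "E A x"] integral_mu_E[OF A cont_meas[OF continuous_on_id]] by simp

lemma U_commute:
  assumes A: "A \<in> borel_T"
  shows "U (E A x) = E A (U x)"
proof -
  define Q where "Q = E (S1 - A)"
  have Ac: "S1 - A \<in> borel_T" by (rule borel_T_Diff[OF S1_borel_T A])
  have Qe: "Q y = y - E A y" for y unfolding Q_def by (rule E_compl[OF A])
  have PQ: "y = E A y + Q y" for y unfolding Qe by simp
  have PQ0: "E A (Q y) = 0" for y
    unfolding Q_def using E_mult[OF A Ac, of y, symmetric] by (simp add: E_empty)
  have QP0: "Q (E A y) = 0" for y
    unfolding Q_def using E_mult[OF Ac A, of y, symmetric] by (simp add: E_empty Int_commute)
  have QQ: "Q (Q y) = Q y" for y unfolding Q_def by (rule E_idem[OF Ac])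
  have Qlin: "Q (y + w) = Q y + Q w" "Q (sm c y) = sm c (Q y)" for y w c
    unfolding Q_def by (rule E_add_right[OF Ac], rule E_sm[OF Ac])
  have Qsa: "ip (Q y) w = ip y (Q w)" for y w unfolding Q_def by (rule E_sa[OF Ac])
  have cross: "ip (U (E A y)) (Q y) + ip (U (Q y)) (E A y) = 0" for y
  proof -
    have i1: "integrable (mu y) (\<lambda>z. indicator A z *\<^sub>R z)"
      by (rule ind_int[OF A continuous_on_id, where K=1]) simp
    have i2: "integrable (mu y) (\<lambda>z. indicator (S1 - A) z *\<^sub>R z)"
      by (rule ind_int[OF Ac continuous_on_id, where K=1]) simp
    have "(LINT z|mu y. z) = (LINT z|mu y. indicator A z *\<^sub>R z + indicator (S1 - A) z *\<^sub>R z)"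
      by (rule Bochner_Integration.integral_cong) (auto split: split_indicator)
    also have "\<dots> = (LINT z|mu y. indicator A z *\<^sub>R z) + (LINT z|mu y. indicator (S1 - A) z *\<^sub>R z)"
      by (rule Bochner_Integration.integral_add[OF i1 i2])
    also have "\<dots> = ip (U (E A y)) (E A y) + ip (U (Q y)) (Q y)"
      unfolding Q_def by (simp only: U_spec_A[OF A] U_spec_A[OF Ac])
    finally have e1: "ip (U y) y = ip (U (E A y)) (E A y) + ip (U (Q y)) (Q y)"
      using U_spec by simp
    have "ip (U y) y = ip (U (E A y) + U (Q y)) (E A y + Q y)"
      using PQ[of y] U_add[of "E A y" "Q y"] by simp
    also have "\<dots> = ip (U (E A y)) (E A y) + ip (U (E A y)) (Q y) + ip (U (Q y)) (E A y) + ip (U (Q y)) (Q y)"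
      by (simp add: ip_add_left ip_add_right)
    finally show ?thesis using e1 by simp
  qed
  have ab: "ip (U (E A a)) (Q b) = 0 \<and> ip (U (Q b)) (E A a) = 0" for a b
  proof -
    have c: "cnj c * ip (U (E A a)) (Q b) + c * ip (U (Q b)) (E A a) = 0" for c
    proof -
      define y where "y = E A a + sm c (Q b)"
      have Py: "E A y = E A a" unfolding y_def
        by (simp add: E_add_right[OF A] E_sm[OF A] E_idem[OF A] PQ0)
      have Qy: "Q y = sm c (Q b)" unfolding y_def
        by (simp add: Qlin QP0 QQ)
      show ?thesis using cross[of y] unfolding Py Qy
        by (simp add: ip_sm_right ip_sm_left U_sm)
    qed
    have c1: "ip (U (E A a)) (Q b) + ip (U (Q b)) (E A a) = 0" using c[of 1] by simp
    have c2: "- \<i> * ip (U (E A a)) (Q b) + \<i> * ip (U (Q b)) (E A a) = 0" using c[of \<i>] by simp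
    from ab_zero[OF c1 c2] show ?thesis .
  qed
  have QUP: "Q (U (E A a)) = 0" for a
  proof (rule ip_eq_zero)
    fix w show "ip (Q (U (E A a))) w = 0" using ab[of a w] Qsa by simp
  qed
  have PUQ: "E A (U (Q b)) = 0" for b
  proof (rule ip_eq_zero)
    fix w show "ip (E A (U (Q b))) w = 0" using ab[of w b] E_sa[OF A] by simp
  qed
  have "U (E A x) = E A (U (E A x)) + Q (U (E A x))" by (rule PQ)
  also have "\<dots> = E A (U (E A x))" using QUP by simp
  also have "\<dots> = E A (U (E A x)) + E A (U (Q x))" using PUQ by simp
  also have "\<dots> = E A (U (E A x + Q x))" by (simp add: U_add E_add_right[OF A])
  also have "\<dots> = E A (U x)" using PQ[of x] by simp
  finally show ?thesis .
qed

end

context hsU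
begin

lemma mu_shift: "mu (U y + sm c y) = density (mu y) (\<lambda>z. ennreal (gc c z))"
proof (rule measure_eqI)
  show "sets (mu (U y + sm c y)) = sets (density (mu y) (\<lambda>z. ennreal (gc c z)))" by simp
  fix B assume "B \<in> sets (mu (U y + sm c y))"
  then have B: "B \<in> borel_T" by simp
  define w where "w = E B y"
  define m where "m = measure (mu y) B"
  define I where "I = (LINT z|mu y. indicator B z *\<^sub>R z)"
  have Ew: "E B (U y + sm c y) = U w + sm c w"
    by (simp add: E_add_right[OF B] E_sm[OF B] U_commute[OF B] w_def)
  have m: "m = (hnorm ip w)\<^sup>2" unfolding m_def w_def by (rule measure_mu[OF B])
  have I: "ip (U w) w = I" unfolding I_def w_def by (rule U_spec_A[OF B])
  have iI: "integrable (mu y) (\<lambda>z. indicator B z *\<^sub>R z)"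
    by (rule ind_int[OF B continuous_on_id, where K=1]) simp
  have iK: "integrable (mu y) (\<lambda>z. indicator B z *\<^sub>R K)" for K :: complex
    by (rule ind_int[OF B continuous_on_const, where K="cmod K"]) simp
  have ig: "integrable (mu y) (\<lambda>z. indicator B z *\<^sub>R gc c z)"
    by (rule ind_int[OF B gc_cont, where K="(1 + cmod c)\<^sup>2"]) (use gc_bound gc_nonneg in auto)
  have "complex_of_real ((hnorm ip (U w + sm c w))\<^sup>2) = ip (U w + sm c w) (U w + sm c w)"
    by (rule ip_self_hnorm[symmetric])
  also have "\<dots> = ip (U w) (U w) + cnj c * ip (U w) w + c * ip w (U w) + c * cnj c * ip w w"
    using ex_expand[of "\<lambda>x. x" "U w" c w] by simp
  also have "\<dots> = complex_of_real m * (1 + c * cnj c) + cnj c * I + c * cnj I"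
    using I ip_sym[of w "U w"] U_ip[of w w] ip_self_hnorm[of w] m by (simp add: algebra_simps)
  finally have lhs: "complex_of_real ((hnorm ip (U w + sm c w))\<^sup>2) = complex_of_real m * (1 + c * cnj c) + cnj c * I + c * cnj I" .
  have "complex_of_real (LINT z|mu y. indicator B z *\<^sub>R gc c z)
      = (LINT z|mu y. complex_of_real (indicator B z *\<^sub>R gc c z))"
    by (rule integral_complex_of_real[symmetric])
  also have "\<dots> = (LINT z|mu y. indicator B z *\<^sub>R (1 + c * cnj c) + (cnj c * (indicator B z *\<^sub>R z) + c * cnj (indicator B z *\<^sub>R z)))"
  proof (rule Bochner_Integration.integral_cong)
    fix z assume "z \<in> space (mu y)"
    then have z: "cmod z = 1" by simp
    show "complex_of_real (indicator B z *\<^sub>R gc c z) = indicator B z *\<^sub>R (1 + c * cnj c) + (cnj c * (indicator B z *\<^sub>R z) + c * cnj (indicator B z *\<^sub>R z))"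
      using gc_S1[OF z, of c] by (simp add: scaleR_conv_of_real algebra_simps split: split_indicator)
  qed simp
  also have "\<dots> = (LINT z|mu y. indicator B z *\<^sub>R (1 + c * cnj c)) + ((LINT z|mu y. cnj c * (indicator B z *\<^sub>R z)) + (LINT z|mu y. c * cnj (indicator B z *\<^sub>R z)))"
  proof -
    have i2: "integrable (mu y) (\<lambda>z. cnj c * (indicator B z *\<^sub>R z))"
      by (rule integrable_mult_right) (rule iI)
    have i3: "integrable (mu y) (\<lambda>z. c * cnj (indicator B z *\<^sub>R z))"
      by (rule integrable_mult_right) (rule integrable_cnj[OF iI])
    have i23: "integrable (mu y) (\<lambda>z. cnj c * (indicator B z *\<^sub>R z) + c * cnj (indicator B z *\<^sub>R z))"
      by (rule Bochner_Integration.integrable_add[OF i2 i3])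
    show ?thesis
      by (simp only: Bochner_Integration.integral_add[OF iK i23] Bochner_Integration.integral_add[OF i2 i3])
  qed
  also have "\<dots> = complex_of_real m * (1 + c * cnj c) + cnj c * I + c * cnj I"
  proof -
    have ir: "integrable (mu y) (indicator B :: complex \<Rightarrow> real)"
      by (rule int_mu[where B=1]) (auto intro: borel_measurable_indicator simp: B split: split_indicator)
    have e1: "(LINT z|mu y. indicator B z *\<^sub>R (1 + c * cnj c)) = complex_of_real m * (1 + c * cnj c)"
      by (subst integral_scaleR_left) (use ir B in \<open>auto simp: m_def scaleR_conv_of_real Int_absorb2[OF borel_T_sub[OF B]]\<close>)
    have e2: "(LINT z|mu y. cnj c * (indicator B z *\<^sub>R z)) = cnj c * I"
      unfolding I_def by (rule integral_mult_right_zero)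
    have e3: "(LINT z|mu y. c * cnj (indicator B z *\<^sub>R z)) = c * cnj I"
      unfolding I_def by (subst integral_mult_right_zero) (rule arg_cong[OF Bochner_Integration.integral_cnj])
    show ?thesis unfolding e1 e2 e3 by (simp add: add.assoc)
  qed
  finally have rhs: "complex_of_real (LINT z|mu y. indicator B z *\<^sub>R gc c z) = complex_of_real m * (1 + c * cnj c) + cnj c * I + c * cnj I" .
  have eqr: "(hnorm ip (U w + sm c w))\<^sup>2 = (LINT z|mu y. indicator B z *\<^sub>R gc c z)"
  proof -
    have "complex_of_real ((hnorm ip (U w + sm c w))\<^sup>2) = complex_of_real (LINT z|mu y. indicator B z *\<^sub>R gc c z)"
      by (rule trans[OF lhs rhs[symmetric]])
    then show ?thesis by (rule of_real_eq_iff[THEN iffD1])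
  qed
  have gm: "(\<lambda>z. ennreal (gc c z)) \<in> borel_measurable (mu y)"
    by (rule measurable_compose[OF cont_meas[OF gc_cont] measurable_ennreal])
  have "emeasure (density (mu y) (\<lambda>z. ennreal (gc c z))) B = (\<integral>\<^sup>+ z. ennreal (gc c z) * indicator B z \<partial>mu y)"
    by (rule emeasure_density[OF gm]) (simp add: B)
  also have "\<dots> = (\<integral>\<^sup>+ z. ennreal (indicator B z *\<^sub>R gc c z) \<partial>mu y)"
    by (rule nn_integral_cong) (simp split: split_indicator)
  also have "\<dots> = ennreal (LINT z|mu y. indicator B z *\<^sub>R gc c z)"
    by (rule nn_integral_eq_integral[OF ig]) (simp add: gc_nonneg)
  also have "\<dots> = emeasure (mu (U y + sm c y)) B"
    by (simp add: emeasure_mu[OF B] Ew eqr)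
  finally show "emeasure (mu (U y + sm c y)) B = emeasure (density (mu y) (\<lambda>z. ennreal (gc c z))) B" ..
qed

lemma integral_shift:
  fixes f :: "complex \<Rightarrow> complex"
  assumes f: "continuous_on UNIV f"
  shows "(LINT z|mu (U y + sm c y). f z) = (LINT z|mu y. gc c z *\<^sub>R f z)"
proof -
  have gm: "gc c \<in> borel_measurable (mu y)" by (rule cont_meas[OF gc_cont])
  show ?thesis unfolding mu_shift
    by (rule integral_density[OF cont_meas[OF f] gm]) (simp add: gc_nonneg)
qed

lemma Upow_add: "(U ^^ n) (x + y) = (U ^^ n) x + (U ^^ n) y"
  by (induction n) (simp_all add: U_add)
lemma Upow_sm: "(U ^^ n) (sm a x) = sm a ((U ^^ n) x)"
  by (induction n) (simp_all add: U_sm)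

lemma int_gc_pow:
  "integrable (mu y) (\<lambda>z. gc c z *\<^sub>R z ^ n)"
proof (rule int_mu[where B="(1 + cmod c)\<^sup>2"])
  show "(\<lambda>z. gc c z *\<^sub>R z ^ n) \<in> borel_measurable (mu y)"
    by (rule cont_meas) (intro continuous_intros gc_cont)
  fix z :: complex assume "z \<in> S1"
  then have z: "cmod z = 1" by simp
  then show "norm (gc c z *\<^sub>R z ^ n) \<le> (1 + cmod c)\<^sup>2"
    using gc_bound[OF z, of c] gc_nonneg[of c z] by (simp add: norm_power)
qed

lemma moments: "ip ((U ^^ n) y) y = (LINT z|mu y. z ^ n)"
proof (induction n arbitrary: y)
  case 0
  have "ip y y = complex_of_real ((hnorm ip (E S1 y))\<^sup>2)" using ip_self_hnorm[of y] E_S1 by simp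
  also have "\<dots> = complex_of_real (measure (mu y) S1)" by (simp add: measure_mu S1_borel_T)
  also have "\<dots> = (LINT z|mu y. z ^ 0)" by (simp add: scaleR_conv_of_real)
  finally show ?case by simp
next
  case (Suc n)
  define T where "T = U ^^ n"
  have T1: "\<And>x y. T (x + y) = T x + T y" unfolding T_def by (rule Upow_add)
  have T2: "\<And>a x. T (sm a x) = sm a (T x)" unfolding T_def by (rule Upow_sm)
  define J where "J c = (LINT z|mu y. gc c z *\<^sub>R z ^ n)" for c
  have Q: "ip (T (U y + sm c y)) (U y + sm c y) = J c" for c
    unfolding T_def J_def Suc.IH by (rule integral_shift) (intro continuous_intros)
  have Q1: "ip (T (U y + y)) (U y + y) = J 1" using Q[of 1] by simp
  have "4 * ip (T (U y)) y = J 1 - J (-1) + \<i> * J \<i> - \<i> * J (-\<i>)"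
    using polarization[of T "U y" y, OF T1 T2] Q1 Q[of "-1"] Q[of \<i>] Q[of "-\<i>"] by simp
  also have "\<dots> = (LINT z|mu y. gc 1 z *\<^sub>R z ^ n - gc (-1) z *\<^sub>R z ^ n + \<i> * (gc \<i> z *\<^sub>R z ^ n) - \<i> * (gc (-\<i>) z *\<^sub>R z ^ n))"
  proof -
    have iF: "integrable (mu y) (\<lambda>z. gc c z *\<^sub>R z ^ n)" for c by (rule int_gc_pow)
    have iiF: "integrable (mu y) (\<lambda>z. \<i> * (gc c z *\<^sub>R z ^ n))" for c
      by (rule integrable_mult_right) (rule iF)
    have i12: "integrable (mu y) (\<lambda>z. gc 1 z *\<^sub>R z ^ n - gc (-1) z *\<^sub>R z ^ n)"
      by (rule Bochner_Integration.integrable_diff[OF iF iF])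
    have i123: "integrable (mu y) (\<lambda>z. gc 1 z *\<^sub>R z ^ n - gc (-1) z *\<^sub>R z ^ n + \<i> * (gc \<i> z *\<^sub>R z ^ n))"
      by (rule Bochner_Integration.integrable_add[OF i12 iiF])
    have m: "(LINT z|mu y. \<i> * (gc c z *\<^sub>R z ^ n)) = \<i> * J c" for c
      unfolding J_def by (rule integral_mult_right_zero)
    show ?thesis
      by (simp only: Bochner_Integration.integral_diff[OF i123 iiF] Bochner_Integration.integral_add[OF i12 iiF]
          Bochner_Integration.integral_diff[OF iF iF] m J_def)
  qed
  also have "\<dots> = (LINT z|mu y. 4 * z ^ Suc n)"
  proof (rule Bochner_Integration.integral_cong)
    fix z :: complex
    have "gc 1 z *\<^sub>R z ^ n - gc (-1) z *\<^sub>R z ^ n + \<i> * (gc \<i> z *\<^sub>R z ^ n) - \<i> * (gc (-\<i>) z *\<^sub>R z ^ n)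
        = (complex_of_real (gc 1 z) - complex_of_real (gc (-1) z) + \<i> * complex_of_real (gc \<i> z)
            - \<i> * complex_of_real (gc (-\<i>) z)) * z ^ n"
      by (simp add: scaleR_conv_of_real algebra_simps)
    also have "\<dots> = 4 * z ^ Suc n" unfolding gc_combo by simp
    finally show "gc 1 z *\<^sub>R z ^ n - gc (-1) z *\<^sub>R z ^ n + \<i> * (gc \<i> z *\<^sub>R z ^ n) - \<i> * (gc (-\<i>) z *\<^sub>R z ^ n) = 4 * z ^ Suc n" .
  qed simp
  also have "\<dots> = 4 * (LINT z|mu y. z ^ Suc n)" by simp
  finally have "ip (T (U y)) y = (LINT z|mu y. z ^ Suc n)" by simp
  moreover have "T (U y) = (U ^^ Suc n) y" by (simp only: T_def funpow_Suc_right comp_apply)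
  ultimately show ?case by simp
qed

end

definition mono_f :: "nat \<Rightarrow> nat \<Rightarrow> complex \<Rightarrow> complex" where
  "mono_f j m z = z ^ j * cnj z ^ m"

definition tp :: "(complex \<times> nat \<times> nat) list \<Rightarrow> complex \<Rightarrow> complex" where
  "tp L z = sum_list (map (\<lambda>(c, j, m). c * mono_f j m z) L)"

lemma tp_Nil[simp]: "tp [] z = 0" unfolding tp_def by simp
lemma tp_Cons[simp]: "tp ((c, j, m) # L) z = c * mono_f j m z + tp L z" unfolding tp_def by simp
lemma tp_append: "tp (L @ L') z = tp L z + tp L' z" unfolding tp_def by simp

definition scl :: "complex \<Rightarrow> (complex \<times> nat \<times> nat) list \<Rightarrow> (complex \<times> nat \<times> nat) list" where
  "scl a L = map (\<lambda>(c, j, m). (a * c, j, m)) L"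
lemma tp_scl: "tp (scl a L) z = a * tp L z"
  unfolding scl_def by (induction L) (auto simp: algebra_simps)

definition shft :: "complex \<Rightarrow> nat \<Rightarrow> nat \<Rightarrow> (complex \<times> nat \<times> nat) list \<Rightarrow> (complex \<times> nat \<times> nat) list" where
  "shft c j m L = map (\<lambda>(d, j', m'). (c * d, j + j', m + m')) L"
lemma tp_shft: "tp (shft c j m L) z = c * mono_f j m z * tp L z"
  unfolding shft_def by (induction L) (auto simp: algebra_simps mono_f_def power_add)

definition prodL :: "(complex \<times> nat \<times> nat) list \<Rightarrow> (complex \<times> nat \<times> nat) list \<Rightarrow> (complex \<times> nat \<times> nat) list" where
  "prodL L L' = concat (map (\<lambda>(c, j, m). shft c j m L') L)"
lemma tp_prodL: "tp (prodL L L') z = tp L z * tp L' z"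
  unfolding prodL_def by (induction L) (auto simp: tp_append tp_shft algebra_simps)

definition cnjL :: "(complex \<times> nat \<times> nat) list \<Rightarrow> (complex \<times> nat \<times> nat) list" where
  "cnjL L = map (\<lambda>(c, j, m). (cnj c, m, j)) L"
lemma tp_cnjL: "tp (cnjL L) z = cnj (tp L z)"
  unfolding cnjL_def by (induction L) (auto simp: mono_f_def)

lemma tp_cont: "continuous_on A (tp L)"
proof (induction L)
  case Nil then show ?case by (simp add: tp_def)
next
  case (Cons a L)
  obtain c j m where a: "a = (c, j, m)" by (cases a)
  have "continuous_on A (\<lambda>z. c * mono_f j m z + tp L z)"
    unfolding mono_f_def by (intro continuous_intros Cons)
  then show ?case by (simp add: a)
qed

lemma re_prod: "Re (1 / 2 * (a * b + a * cnj b)) = Re a * Re b"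
  by (simp add: algebra_simps) (simp add: field_simps)

lemma space_bT: "sets M = borel_T \<Longrightarrow> space M = S1"
proof -
  assume s: "sets M = borel_T"
  have "space M \<in> sets M" by (rule sets.top)
  then have "space M \<subseteq> S1" using s borel_T_sub by auto
  moreover have "S1 \<subseteq> space M" using sets.sets_into_space[of S1 M] s S1_borel_T by auto
  ultimately show ?thesis by auto
qed

lemma meas_bT:
  assumes s: "sets M = borel_T" and f: "continuous_on S1 f"
  shows "f \<in> borel_measurable M"
proof -
  have eq: "measurable M borel = measurable (restrict_space borel S1) borel"
    by (rule measurable_cong_sets) (simp_all add: s borel_T_eq)
  show ?thesis unfolding eq by (rule borel_measurable_continuous_on_restrict[OF f])
qed

lemma int_bT:
  fixes f :: "complex \<Rightarrow> 'b::{banach,second_countable_topology}"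
  assumes fm: "finite_measure M" and s: "sets M = borel_T" and f: "continuous_on S1 f"
  shows "integrable M f"
proof -
  interpret finite_measure M by (rule fm)
  have "compact (f ` S1)" by (rule compact_continuous_image[OF f compact_sphere])
  then have "bounded (f ` S1)" by (rule compact_imp_bounded)
  then obtain B where B: "\<forall>z\<in>S1. norm (f z) \<le> B" unfolding bounded_iff by auto
  show ?thesis
  proof (rule integrable_const_bound[where B=B])
    show "AE x in M. norm (f x) \<le> B" using B space_bT[OF s] by (auto intro!: AE_I2)
    show "f \<in> borel_measurable M" by (rule meas_bT[OF s f])
  qed
qed

lemma mono_S1:
  assumes z: "cmod z = 1"
  shows "mono_f j m z = (if m \<le> j then z ^ (j - m) else cnj (z ^ (m - j)))"
proof -
  have zz: "z * cnj z = 1"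
    using complex_norm_square[of z] z by simp
  show ?thesis
  proof (cases "m \<le> j")
    case True
    have "z ^ j = z ^ (j - m) * z ^ m" using True by (simp add: power_add[symmetric])
    then have "mono_f j m z = z ^ (j - m) * (z ^ m * cnj z ^ m)"
      unfolding mono_f_def by (simp add: mult.assoc)
    also have "z ^ m * cnj z ^ m = (z * cnj z) ^ m" by (rule power_mult_distrib[symmetric])
    finally have "mono_f j m z = z ^ (j - m) * (z * cnj z) ^ m" .
    then show ?thesis using True zz by simp
  next
    case False
    have "cnj z ^ m = cnj z ^ j * cnj z ^ (m - j)" using False by (simp add: power_add[symmetric])
    then have "mono_f j m z = (z ^ j * cnj z ^ j) * cnj z ^ (m - j)"
      unfolding mono_f_def by (simp add: mult.assoc)
    also have "z ^ j * cnj z ^ j = (z * cnj z) ^ j" by (rule power_mult_distrib[symmetric])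
    finally have "mono_f j m z = (z * cnj z) ^ j * cnj z ^ (m - j)" .
    then show ?thesis using False zz by simp
  qed
qed

locale two_meas =
  fixes M N :: "complex measure"
  assumes fM: "finite_measure M" and fN: "finite_measure N"
    and sM: "sets M = borel_T" and sN: "sets N = borel_T"
    and mom: "\<And>n. (LINT z|M. z ^ n) = (LINT z|N. z ^ n)"
begin

lemma spM: "space M = S1" by (rule space_bT[OF sM])
lemma spN: "space N = S1" by (rule space_bT[OF sN])

lemma mono_int_M: "(LINT z|M. mono_f j m z) = (if m \<le> j then (LINT z|M. z ^ (j - m)) else cnj (LINT z|M. z ^ (m - j)))"
proof -
  have eq: "(LINT z|M. mono_f j m z) = (LINT z|M. (if m \<le> j then z ^ (j - m) else cnj (z ^ (m - j))))"
    by (rule Bochner_Integration.integral_cong) (auto simp: spM mono_S1)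
  show ?thesis
  proof (cases "m \<le> j")
    case True then show ?thesis using eq by simp
  next
    case False
    have "(LINT z|M. mono_f j m z) = (LINT z|M. cnj (z ^ (m - j)))"
      using eq by (simp only: if_not_P[OF False])
    also have "\<dots> = cnj (LINT z|M. z ^ (m - j))" by (rule Bochner_Integration.integral_cnj)
    finally show ?thesis by (simp only: if_not_P[OF False])
  qed
qed

lemma mono_int_N: "(LINT z|N. mono_f j m z) = (if m \<le> j then (LINT z|N. z ^ (j - m)) else cnj (LINT z|N. z ^ (m - j)))"
proof -
  have eq: "(LINT z|N. mono_f j m z) = (LINT z|N. (if m \<le> j then z ^ (j - m) else cnj (z ^ (m - j))))"
    by (rule Bochner_Integration.integral_cong) (auto simp: spN mono_S1)
  show ?thesis
  proof (cases "m \<le> j")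
    case True then show ?thesis using eq by simp
  next
    case False
    have "(LINT z|N. mono_f j m z) = (LINT z|N. cnj (z ^ (m - j)))"
      using eq by (simp only: if_not_P[OF False])
    also have "\<dots> = cnj (LINT z|N. z ^ (m - j))" by (rule Bochner_Integration.integral_cnj)
    finally show ?thesis by (simp only: if_not_P[OF False])
  qed
qed

lemma mono_eq: "(LINT z|M. mono_f j m z) = (LINT z|N. mono_f j m z)"
  unfolding mono_int_M mono_int_N mom ..

lemma tp_int:
  assumes fK: "finite_measure K" and sK: "sets K = borel_T"
  shows "(LINT z|K. tp L z) = sum_list (map (\<lambda>(c, j, m). c * (LINT z|K. mono_f j m z)) L)"
proof (induction L)
  case Nil then show ?case by simp
next
  case (Cons a L)
  obtain c j m where a: "a = (c, j, m)" by (cases a)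
  have i1: "integrable K (\<lambda>z. c * mono_f j m z)"
    by (rule int_bT[OF fK sK]) (unfold mono_f_def, intro continuous_intros)
  have i2: "integrable K (tp L)" by (rule int_bT[OF fK sK tp_cont])
  have "(LINT z|K. tp (a # L) z) = (LINT z|K. c * mono_f j m z + tp L z)" by (simp add: a)
  also have "\<dots> = (LINT z|K. c * mono_f j m z) + (LINT z|K. tp L z)"
    by (rule Bochner_Integration.integral_add[OF i1 i2])
  also have "\<dots> = c * (LINT z|K. mono_f j m z) + (LINT z|K. tp L z)"
    by simp
  finally show ?case using Cons by (simp add: a)
qed

lemma tp_eq: "(LINT z|M. tp L z) = (LINT z|N. tp L z)"
  unfolding tp_int[OF fM sM] tp_int[OF fN sN] mono_eq ..

lemma approx_bound:
  fixes f g :: "complex \<Rightarrow> real"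
  assumes fK: "finite_measure K" and sK: "sets K = borel_T"
    and f: "continuous_on S1 f" and g: "continuous_on S1 g" and fg: "\<And>x. x \<in> S1 \<Longrightarrow> \<bar>f x - g x\<bar> \<le> e"
  shows "\<bar>(LINT z|K. f z) - (LINT z|K. g z)\<bar> \<le> e * measure K S1"
proof -
  interpret finite_measure K by (rule fK)
  have iF: "integrable K f" by (rule int_bT[OF fK sK f])
  have iG: "integrable K g" by (rule int_bT[OF fK sK g])
  have iFG: "integrable K (\<lambda>z. f z - g z)" by (rule Bochner_Integration.integrable_diff[OF iF iG])
  have "\<bar>(LINT z|K. f z) - (LINT z|K. g z)\<bar> = \<bar>LINT z|K. f z - g z\<bar>"
    by (simp add: Bochner_Integration.integral_diff[OF iF iG])
  also have "\<dots> \<le> (LINT z|K. \<bar>f z - g z\<bar>)" by (rule integral_abs_bound)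
  also have "\<dots> \<le> (LINT z|K. e)"
    by (rule integral_mono) (use iFG fg sK space_bT in \<open>auto simp: space_bT[OF sK]\<close>)
  also have "\<dots> = e * measure K S1" by (simp add: space_bT[OF sK])
  finally show ?thesis .
qed

lemma cont_eq:
  fixes f :: "complex \<Rightarrow> real"
  assumes f: "continuous_on S1 f"
  shows "(LINT z|M. f z) = (LINT z|N. f z)"
proof -
  define P where "P h \<longleftrightarrow> continuous_on S1 h \<and> (\<exists>L. \<forall>z\<in>S1. h z = Re (tp L z))" for h :: "complex \<Rightarrow> real"
  have approx: "\<exists>g. P g \<and> (\<forall>x\<in>S1. \<bar>f x - g x\<bar> < e)" if e: "0 < e" for e
  proof (rule Stone_Weierstrass_HOL[of S1 P f e])
    show "compact S1" by (rule compact_sphere)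
    show "P (\<lambda>x. c)" for c
      unfolding P_def by (intro conjI continuous_intros exI[of _ "[(complex_of_real c, 0, 0)]"]) (simp add: mono_f_def)
    show "continuous_on S1 h" if "P h" for h using that unfolding P_def by simp
    show "P (\<lambda>x. h x + k x)" if "P h \<and> P k" for h k
    proof -
      from that obtain L L' where L: "\<forall>z\<in>S1. h z = Re (tp L z)" and L': "\<forall>z\<in>S1. k z = Re (tp L' z)"
        and c: "continuous_on S1 h" "continuous_on S1 k" unfolding P_def by blast
      show ?thesis unfolding P_def
        by (intro conjI continuous_intros c exI[of _ "L @ L'"]) (simp add: tp_append L L')
    qed
    show "P (\<lambda>x. h x * k x)" if "P h \<and> P k" for h k
    proof -
      from that obtain L L' where L: "\<forall>z\<in>S1. h z = Re (tp L z)" and L': "\<forall>z\<in>S1. k z = Re (tp L' z)"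
        and c: "continuous_on S1 h" "continuous_on S1 k" unfolding P_def by blast
      show ?thesis unfolding P_def
        by (intro conjI continuous_intros c exI[of _ "scl (1/2) (prodL L L' @ prodL L (cnjL L'))"])
          (simp add: tp_append tp_scl tp_prodL tp_cnjL L L' re_prod)
    qed
    show "\<exists>h. P h \<and> h x \<noteq> h y" if "x \<in> S1 \<and> y \<in> S1 \<and> x \<noteq> y" for x y
    proof (cases "Re x = Re y")
      case True
      then have "Im x \<noteq> Im y" using that complex_eqI by blast
      moreover have "P Im" unfolding P_def
        by (intro conjI continuous_intros exI[of _ "[(- \<i>, 1, 0)]"]) (simp add: mono_f_def)
      ultimately show ?thesis by blast
    next
      case False
      moreover have "P Re" unfolding P_def
        by (intro conjI continuous_intros exI[of _ "[(1, 1, 0)]"]) (simp add: mono_f_def)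
      ultimately show ?thesis by blast
    qed
    show "continuous_on S1 f" by (rule f)
    show "0 < e" by (rule e)
  qed
  define K where "K = measure M S1 + measure N S1"
  have K: "K \<ge> 0" unfolding K_def by simp
  have bound: "\<bar>(LINT z|M. f z) - (LINT z|N. f z)\<bar> \<le> e * K" if e: "0 < e" for e
  proof -
    obtain g where Pg: "P g" and g: "\<forall>x\<in>S1. \<bar>f x - g x\<bar> < e" using approx[OF e] by blast
    from Pg obtain L where gc: "continuous_on S1 g" and L: "\<forall>z\<in>S1. g z = Re (tp L z)"
      unfolding P_def by blast
    have gM: "(LINT z|M. g z) = Re (LINT z|M. tp L z)"
    proof -
      have "(LINT z|M. g z) = (LINT z|M. Re (tp L z))"
        by (rule Bochner_Integration.integral_cong) (simp_all add: spM L)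
      also have "\<dots> = Re (LINT z|M. tp L z)"
        by (rule integral_Re[OF int_bT[OF fM sM tp_cont]])
      finally show ?thesis .
    qed
    have gN: "(LINT z|N. g z) = Re (LINT z|N. tp L z)"
    proof -
      have "(LINT z|N. g z) = (LINT z|N. Re (tp L z))"
        by (rule Bochner_Integration.integral_cong) (simp_all add: spN L)
      also have "\<dots> = Re (LINT z|N. tp L z)"
        by (rule integral_Re[OF int_bT[OF fN sN tp_cont]])
      finally show ?thesis .
    qed
    have gg: "(LINT z|M. g z) = (LINT z|N. g z)" unfolding gM gN tp_eq ..
    have le: "\<And>x. x \<in> S1 \<Longrightarrow> \<bar>f x - g x\<bar> \<le> e" using g by (simp add: less_imp_le)
    have bM: "\<bar>(LINT z|M. f z) - (LINT z|M. g z)\<bar> \<le> e * measure M S1"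
      by (rule approx_bound[OF fM sM f gc le])
    have bN: "\<bar>(LINT z|N. f z) - (LINT z|N. g z)\<bar> \<le> e * measure N S1"
      by (rule approx_bound[OF fN sN f gc le])
    show ?thesis using bM bN gg unfolding K_def by (simp add: algebra_simps abs_diff_le_iff)
  qed
  show ?thesis
  proof (rule ccontr)
    assume ne: "(LINT z|M. f z) \<noteq> (LINT z|N. f z)"
    define d where "d = \<bar>(LINT z|M. f z) - (LINT z|N. f z)\<bar>"
    have d: "d > 0" using ne unfolding d_def by simp
    have "d \<le> (d / (K + 1)) * K" unfolding d_def by (rule bound) (use d K in \<open>simp add: d_def\<close>)
    also have "\<dots> < d"
    proof -
      have "(d / (K + 1)) * K = d * (K / (K + 1))" by simp
      also have "\<dots> < d * 1" using d K by (intro mult_strict_left_mono) auto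
      finally show ?thesis by simp
    qed
    finally show False by simp
  qed
qed

end

lemma borel_T_sigma: "sigma_sets S1 {F. closed F \<and> F \<subseteq> S1} = borel_T"
proof -
  have S1c: "S1 \<in> sigma_sets UNIV (Collect closed)"
    by (rule sigma_sets.Basic) simp
  have "(\<inter>) S1 ` sigma_sets UNIV (Collect closed) = sigma_sets S1 ((\<inter>) S1 ` Collect closed)"
    by (rule sigma_sets_Int[OF S1c]) simp
  moreover have "(\<inter>) S1 ` Collect closed = {F. closed F \<and> F \<subseteq> S1}"
  proof
    show "(\<inter>) S1 ` Collect closed \<subseteq> {F. closed F \<and> F \<subseteq> S1}"
      by (auto intro: closed_Int)
    show "{F. closed F \<and> F \<subseteq> S1} \<subseteq> (\<inter>) S1 ` Collect closed"
    proof
      fix F assume "F \<in> {F. closed F \<and> F \<subseteq> S1}"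
      then show "F \<in> (\<inter>) S1 ` Collect closed" by (intro image_eqI[of _ _ F]) auto
    qed
  qed
  moreover have "sigma_sets UNIV (Collect closed) = sets (borel :: complex measure)"
    unfolding borel_eq_closed by (rule sets_measure_of[symmetric]) simp
  moreover have "(\<inter>) S1 ` sets (borel :: complex measure) = borel_T"
    using borel_T_eq sets_restrict_space[of borel S1] by simp
  ultimately show ?thesis by simp
qed

context two_meas
begin

lemma closed_eq:
  assumes F: "closed F" "F \<subseteq> S1"
  shows "emeasure M F = emeasure N F"
proof (cases "F = {}")
  case True then show ?thesis by simp
next
  case ne: False
  define s where "s k z = max 0 (1 - real k * infdist z F)" for k :: nat and z :: complex
  have sc: "continuous_on S1 (s k)" for k
    unfolding s_def by (intro continuous_intros)
  have lim: "(\<lambda>k. s k z) \<longlonglongrightarrow> indicator F z" for z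
  proof (cases "z \<in> F")
    case True then show ?thesis by (simp add: s_def)
  next
    case False
    then have d: "infdist z F > 0"
      using in_closed_iff_infdist_zero[OF F(1) ne] infdist_nonneg[of z F] by simp
    obtain N :: nat where N: "real N > 1 / infdist z F" using reals_Archimedean2 by blast
    have "s k z = 0" if "k \<ge> N" for k
    proof -
      have "real k \<ge> real N" using that by simp
      then have "1 / infdist z F < real k" using N by linarith
      then have "1 < real k * infdist z F" by (simp only: pos_divide_less_eq[OF d])
      then have "real k * infdist z F > 1" by simp
      then show ?thesis unfolding s_def by simp
    qed
    then have "\<forall>\<^sub>F k in sequentially. s k z = indicator F z"
      using False unfolding eventually_sequentially by auto
    then show ?thesis by (rule tendsto_eventually)
  qed
  have bnd: "norm (s k z) \<le> 1" for k z
    unfolding s_def by (simp add: infdist_nonneg)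
  have conv: "(\<lambda>k. LINT z|K. s k z) \<longlonglongrightarrow> measure K F"
    if fK: "finite_measure K" and sK: "sets K = borel_T" for K
  proof -
    interpret finite_measure K by (rule fK)
    have FK: "F \<in> sets K" using F sK unfolding borel_T_def by (auto intro: borel_closed)
    have "(\<lambda>k. LINT z|K. s k z) \<longlonglongrightarrow> (LINT z|K. indicator F z)"
    proof (rule integral_dominated_convergence[where w="\<lambda>_. 1"])
      show "(indicator F :: complex \<Rightarrow> real) \<in> borel_measurable K"
        by (rule borel_measurable_indicator[OF FK])
      show "s k \<in> borel_measurable K" for k by (rule meas_bT[OF sK sc])
      show "integrable K (\<lambda>_. 1::real)" by simp
      show "AE x in K. (\<lambda>k. s k x) \<longlonglongrightarrow> indicator F x" using lim by simp
      show "AE x in K. norm (s k x) \<le> 1" for k using bnd by simp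
    qed
    moreover have "(LINT z|K. indicator F z) = measure K F"
      using FK by (simp add: Int_absorb2 sets.sets_into_space)
    ultimately show ?thesis by simp
  qed
  have eqk: "(LINT z|M. s k z) = (LINT z|N. s k z)" for k by (rule cont_eq[OF sc])
  have "measure M F = measure N F"
    using conv[OF fM sM] conv[OF fN sN] unfolding eqk by (rule LIMSEQ_unique)
  then show ?thesis
    using finite_measure.emeasure_eq_measure[OF fM] finite_measure.emeasure_eq_measure[OF fN] by simp
qed

lemma meas_eq: "M = N"
proof (rule measure_eqI_generator_eq[where E="{F. closed F \<and> F \<subseteq> S1}" and \<Omega>=S1 and A="\<lambda>_. S1"])
  show "Int_stable {F. closed F \<and> F \<subseteq> S1}"
    unfolding Int_stable_def by (auto intro: closed_Int)
  show "{F. closed F \<and> F \<subseteq> S1} \<subseteq> Pow S1" by auto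
  show "emeasure M X = emeasure N X" if "X \<in> {F. closed F \<and> F \<subseteq> S1}" for X
    using that closed_eq by auto
  show "sets M = sigma_sets S1 {F. closed F \<and> F \<subseteq> S1}" by (simp add: sM borel_T_sigma)
  show "sets N = sigma_sets S1 {F. closed F \<and> F \<subseteq> S1}" by (simp add: sN borel_T_sigma)
  show "range (\<lambda>_. S1) \<subseteq> {F. closed F \<and> F \<subseteq> S1}" by auto
  show "(\<Union>i::nat. S1) = S1" by simp
  show "emeasure M S1 \<noteq> \<infinity>" for i :: nat
    using finite_measure.emeasure_finite[OF fM] by simp
qed

end

lemma cnj_meas: "cnj \<in> measurable (pvm_scalar ip E x) (pvm_scalar ip' E' y)"
proof -
  have s1: "sets (pvm_scalar ip E x) = borel_T"
    unfolding pvm_scalar_def using sigma_algebra.sets_measure_of_eq[OF sigma_algebra_borel_T] .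
  have s2: "sets (pvm_scalar ip' E' y) = borel_T"
    unfolding pvm_scalar_def using sigma_algebra.sets_measure_of_eq[OF sigma_algebra_borel_T] .
  have eq: "measurable (pvm_scalar ip E x) (pvm_scalar ip' E' y) = measurable (restrict_space borel S1) (restrict_space borel S1)"
    by (rule measurable_cong_sets) (simp_all add: s1 s2 borel_T_eq)
  have "cnj \<in> measurable (restrict_space borel S1) (restrict_space borel S1)"
    by (rule measurable_restrict_space3) (auto intro: borel_measurable_continuous_onI)
  then show ?thesis unfolding eq .
qed

lemma cnj_preimage: "A \<subseteq> S1 \<Longrightarrow> cnj -` A \<inter> S1 = cnj ` A"
  by (auto simp: image_iff) (metis complex_cnj_cnj)

context hsU
begin

lemma conj_ip:
  assumes C: "conjugation sm ip C"
  shows "ip (C a) (C b) = cnj (ip a b)"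
proof -
  have Cadd: "C (x + y) = C x + C y" for x y using C unfolding conjugation_def by blast
  have Csm: "C (sm d x) = sm (cnj d) (C x)" for d x using C unfolding conjugation_def by blast
  have Cn: "hnorm ip (C x) = hnorm ip x" for x using C unfolding conjugation_def by blast
  define q where "q v = ip v v" for v
  have qC: "q (C v) = q v" for v unfolding q_def ip_self_hnorm Cn ..
  have qr: "cnj (q v) = q v" for v unfolding q_def ip_self_hnorm by simp
  have sh: "C a + sm d (C b) = C (a + sm (cnj d) b)" for d
    by (simp add: Cadd Csm)
  have P1: "4 * ip a b = q (a + b) - q (a + sm (-1) b) + \<i> * q (a + sm \<i> b) - \<i> * q (a + sm (-\<i>) b)"
    unfolding q_def using polarization[of "\<lambda>x. x" a b] by simp
  have P2: "4 * ip (C a) (C b) = q (C a + C b) - q (C a + sm (-1) (C b)) + \<i> * q (C a + sm \<i> (C b)) - \<i> * q (C a + sm (-\<i>) (C b))"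
    unfolding q_def using polarization[of "\<lambda>x. x" "C a" "C b"] by simp
  have e1: "q (C a + C b) = q (a + b)" by (simp add: Cadd[symmetric] qC)
  have e2: "q (C a + sm (-1) (C b)) = q (a + sm (-1) b)" using sh[of "-1"] qC by simp
  have e3: "q (C a + sm \<i> (C b)) = q (a + sm (-\<i>) b)" using sh[of "\<i>"] qC by simp
  have e4: "q (C a + sm (-\<i>) (C b)) = q (a + sm \<i> b)" using sh[of "-\<i>"] qC by simp
  have "4 * ip (C a) (C b) = q (a + b) - q (a + sm (-1) b) + \<i> * q (a + sm (-\<i>) b) - \<i> * q (a + sm \<i> b)"
    using P2 e1 e2 e3 e4 by simp
  also have "\<dots> = cnj (4 * ip a b)"
    unfolding P1 by (simp add: qr)
  finally show ?thesis by simp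
qed

lemma conj_Upow:
  assumes C: "conjugation sm ip C" and CU: "\<forall>x. C (U (C x)) = U x"
  shows "C ((U ^^ n) (C x)) = (U ^^ n) x"
proof (induction n arbitrary: x)
  case 0 then show ?case using C unfolding conjugation_def by simp
next
  case (Suc n)
  have CC: "C (C y) = y" for y using C unfolding conjugation_def by blast
  have "C ((U ^^ Suc n) (C x)) = C (U (C (C ((U ^^ n) (C x)))))" by (simp add: CC)
  also have "\<dots> = U (C ((U ^^ n) (C x)))" using CU by simp
  also have "\<dots> = U ((U ^^ n) x)" using Suc by simp
  finally show ?case by simp
qed

lemma conj_E:
  assumes C: "conjugation sm ip C" and CU: "\<forall>x. C (U (C x)) = U x" and A: "A \<in> borel_T"
  shows "C (E (cnj ` A) (C x)) = E A x"
proof -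
  have Cadd: "C (x + y) = C x + C y" for x y using C unfolding conjugation_def by blast
  have Csm: "C (sm d x) = sm (cnj d) (C x)" for d x using C unfolding conjugation_def by blast
  have CC: "C (C y) = y" for y using C unfolding conjugation_def by blast
  have A': "cnj ` A \<in> borel_T" by (rule borel_T_cnj[OF A])
  have norms: "(hnorm ip (E A y))\<^sup>2 = (hnorm ip (E (cnj ` A) (C y)))\<^sup>2" for y
  proof -
    define N where "N = distr (mu (C y)) (mu y) cnj"
    have cm: "cnj \<in> measurable (mu (C y)) (mu y)" by (rule cnj_meas)
    have fN: "finite_measure N" unfolding N_def
      by (rule finite_measure.finite_measure_distr[OF finite_mu cm])
    have sN: "sets N = borel_T" unfolding N_def by simp
    have mom: "(LINT z|mu y. z ^ n) = (LINT z|N. z ^ n)" for n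
    proof -
      have pm: "(\<lambda>z. z ^ n) \<in> borel_measurable (mu y)"
        by (rule meas_mu) (rule borel_measurable_continuous_onI, intro continuous_intros)
      have "(LINT z|N. z ^ n) = (LINT z|mu (C y). cnj z ^ n)"
        unfolding N_def by (rule integral_distr[OF cm pm])
      also have "\<dots> = (LINT z|mu (C y). cnj (z ^ n))" by simp
      also have "\<dots> = cnj (LINT z|mu (C y). z ^ n)" by (rule Bochner_Integration.integral_cnj)
      also have "\<dots> = cnj (ip ((U ^^ n) (C y)) (C y))" by (simp only: moments)
      also have "\<dots> = ip (C ((U ^^ n) (C y))) (C (C y))" by (simp only: conj_ip[OF C])
      also have "\<dots> = ip ((U ^^ n) y) y" by (simp only: conj_Upow[OF C CU] CC)
      also have "\<dots> = (LINT z|mu y. z ^ n)" by (rule moments)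
      finally show ?thesis by simp
    qed
    have tm: "two_meas (mu y) N"
      by (rule two_meas.intro[OF finite_mu fN sets_mu sN mom])
    have eqm: "mu y = N" by (rule two_meas.meas_eq[OF tm])
    have "ennreal ((hnorm ip (E A y))\<^sup>2) = emeasure (mu y) A" by (simp add: emeasure_mu[OF A])
    also have "\<dots> = emeasure N A" using eqm by simp
    also have "\<dots> = emeasure (mu (C y)) (cnj -` A \<inter> space (mu (C y)))"
      unfolding N_def by (rule emeasure_distr[OF cm]) (simp add: A)
    also have "cnj -` A \<inter> space (mu (C y)) = cnj ` A"
      using cnj_preimage[OF borel_T_sub[OF A]] by simp
    also have "emeasure (mu (C y)) (cnj ` A) = ennreal ((hnorm ip (E (cnj ` A) (C y)))\<^sup>2)"
      by (rule emeasure_mu[OF A'])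
    finally show ?thesis by simp
  qed
  define G where "G y = C (E (cnj ` A) (C y))" for y
  have G1: "G (y + w) = G y + G w" for y w
    unfolding G_def by (simp add: Cadd E_add_right[OF A'])
  have G2: "G (sm d y) = sm d (G y)" for d y
    unfolding G_def by (simp add: Csm E_sm[OF A'])
  have E1: "E A (y + w) = E A y + E A w" for y w by (rule E_add_right[OF A])
  have E2: "E A (sm d y) = sm d (E A y)" for d y by (rule E_sm[OF A])
  have qf: "ip (G y) y = ip (E A y) y" for y
  proof -
    have "ip (G y) y = ip (C (E (cnj ` A) (C y))) (C (C y))" unfolding G_def CC ..
    also have "\<dots> = cnj (ip (E (cnj ` A) (C y)) (C y))" by (rule conj_ip[OF C])
    also have "\<dots> = complex_of_real ((hnorm ip (E (cnj ` A) (C y)))\<^sup>2)"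
      by (simp add: E_ip_self[OF A'])
    also have "\<dots> = ip (E A y) y" by (simp add: E_ip_self[OF A] norms)
    finally show ?thesis .
  qed
  have "G x = E A x" by (rule quad_form_unique[OF G1 G2 E1 E2 qf])
  then show ?thesis unfolding G_def .
qed

end

theorem proposition4p4:
  fixes sm :: "complex \<Rightarrow> 'h::ab_group_add \<Rightarrow> 'h"
    and ip :: "'h \<Rightarrow> 'h \<Rightarrow> complex"
    and U :: "'h \<Rightarrow> 'h"
    and E :: "complex set \<Rightarrow> 'h \<Rightarrow> 'h"
    and \<Omega> :: "complex set"
  assumes H: "complex_hilbert_space sm ip"
    and sep: "hseparable ip"
    and U: "unitary_op sm ip U"
    and E: "spectral_measure_of sm ip U E"
    and \<Omega>: "\<Omega> \<in> borel_T"
  shows "(cnj ` \<Omega> = \<Omega> \<longrightarrow>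
            (\<forall>C. conjugation sm ip C \<and> (\<forall>x. C (U (C x)) = U x)
                 \<longrightarrow> C ` range (E \<Omega>) = range (E \<Omega>)))
       \<and> (\<forall>C. conjugation sm ip C \<and> (\<forall>x. C (U (C x)) = U x) \<and> C ` range (E \<Omega>) \<subseteq> range (E \<Omega>)
                 \<longrightarrow> (\<forall>x. E (\<Omega> - cnj ` \<Omega>) x = 0))"
proof -
  interpret hsU sm ip E U
  proof
    show "complex_hilbert_space sm ip" by (rule H)
    show "pv_measure sm ip E" using E unfolding spectral_measure_of_def by blast
    show "unitary_op sm ip U" by (rule U)
    show "spectral_measure_of sm ip U E" by (rule E)
  qed
  have cc: "cnj ` cnj ` B = B" for B :: "complex set"
    by (simp add: image_image)
  have partA: "C ` range (E \<Omega>) = range (E \<Omega>)"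
    if sym: "cnj ` \<Omega> = \<Omega>" and C: "conjugation sm ip C" and CU: "\<forall>x. C (U (C x)) = U x" for C
  proof -
    have CC: "C (C y) = y" for y using C unfolding conjugation_def by blast
    have key: "C (E \<Omega> (C y)) = E \<Omega> y" for y using conj_E[OF C CU \<Omega>, of y] sym by simp
    show ?thesis
    proof
      show "C ` range (E \<Omega>) \<subseteq> range (E \<Omega>)"
      proof
        fix v assume "v \<in> C ` range (E \<Omega>)"
        then obtain y where v: "v = C (E \<Omega> y)" by auto
        have "v = E \<Omega> (C y)" unfolding v using key[of "C y"] CC by simp
        then show "v \<in> range (E \<Omega>)" by simp
      qed
      show "range (E \<Omega>) \<subseteq> C ` range (E \<Omega>)"
      proof
        fix v assume "v \<in> range (E \<Omega>)"
        then obtain y where v: "v = E \<Omega> y" by auto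
        have "v = C (E \<Omega> (C y))" unfolding v using key[of y] by simp
        then show "v \<in> C ` range (E \<Omega>)" by simp
      qed
    qed
  qed
  have partB: "E (\<Omega> - cnj ` \<Omega>) x = 0"
    if C: "conjugation sm ip C" and CU: "\<forall>x. C (U (C x)) = U x" and sub: "C ` range (E \<Omega>) \<subseteq> range (E \<Omega>)" for C x
  proof -
    have Cadd: "C (x + y) = C x + C y" for x y using C unfolding conjugation_def by blast
    have C0: "C 0 = 0" using Cadd[of 0 0] by simp
    define Os where "Os = cnj ` \<Omega>"
    have Os: "Os \<in> borel_T" unfolding Os_def by (rule borel_T_cnj[OF \<Omega>])
    have k1: "C (E \<Omega> (C y)) = E Os y" for y
      using conj_E[OF C CU Os, of y] unfolding Os_def cc .
    have z1: "E (Os - \<Omega>) y = 0" for y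
    proof -
      have "C (E \<Omega> (C y)) \<in> C ` range (E \<Omega>)" by (intro imageI rangeI)
      then have "C (E \<Omega> (C y)) \<in> range (E \<Omega>)" using sub by (rule subsetD[rotated])
      then have "E Os y \<in> range (E \<Omega>)" unfolding k1 .
      then obtain v where v: "E Os y = E \<Omega> v" by auto
      have "E \<Omega> (E Os y) = E Os y" unfolding v by (rule E_idem[OF \<Omega>])
      then have i: "E (\<Omega> \<inter> Os) y = E Os y" using E_mult[OF \<Omega> Os] by simp
      have d: "(Os \<inter> \<Omega>) \<inter> (Os - \<Omega>) = {}" by auto
      have u: "(Os \<inter> \<Omega>) \<union> (Os - \<Omega>) = Os" by auto
      have "E Os y = E (Os \<inter> \<Omega>) y + E (Os - \<Omega>) y"
        using E_add_disj[OF borel_T_Int[OF Os \<Omega>] borel_T_Diff[OF Os \<Omega>] d, of y] u by simp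
      then show ?thesis using i by (simp add: Int_commute)
    qed
    have im: "cnj ` (\<Omega> - Os) = Os - \<Omega>"
    proof -
      have "inj cnj" by (rule injI) simp
      then have "cnj ` (\<Omega> - Os) = cnj ` \<Omega> - cnj ` Os" by (rule image_set_diff)
      then show ?thesis unfolding Os_def cc .
    qed
    have "E (\<Omega> - Os) x = C (E (cnj ` (\<Omega> - Os)) (C x))"
      using conj_E[OF C CU borel_T_Diff[OF \<Omega> Os], of x] by simp
    also have "\<dots> = 0" unfolding im z1 C0 ..
    finally show ?thesis unfolding Os_def .
  qed
  show ?thesis
  proof (intro conjI impI allI)
    fix C assume sym: "cnj ` \<Omega> = \<Omega>" and h: "conjugation sm ip C \<and> (\<forall>x. C (U (C x)) = U x)"
    show "C ` range (E \<Omega>) = range (E \<Omega>)" by (rule partA[OF sym conjunct1[OF h] conjunct2[OF h]])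
  next
    fix C x assume h: "conjugation sm ip C \<and> (\<forall>x. C (U (C x)) = U x) \<and> C ` range (E \<Omega>) \<subseteq> range (E \<Omega>)"
    show "E (\<Omega> - cnj ` \<Omega>) x = 0"
      by (rule partB[OF conjunct1[OF h] conjunct1[OF conjunct2[OF h]] conjunct2[OF conjunct2[OF h]]])
  qed
qed


end
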